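(* Assume $f_j'(u)+1\ne0$ and $f_j''(u)\ne0$ for all $u$ and all $1\le j\le k$, and let $\ell\ge2$. For $P\in\mathcal M_F$ and a normalized basis $\mathcal B=\{U_0,\dots,U_k,V_0,\dots,V_k,S_1,\dots,S_k\}$ of $(T_P\mathcal M_F,g_F|_P,R_P)$ define $$(\beta_\ell)_{\mathcal B}=\sum_{j=1}^k\frac{\nabla^\ell R(U_0,U_j,U_j,S_j;U_j,\dots,U_j)}{\bigl(\nabla R(U_0,U_j,U_j,S_j;U_j)\bigr)^{\ell}}.$$ Then $(\beta_\ell)_{\mathcal B}$ is independent of the choice of normalized basis $\mathcal B$ of $T_P\mathcal M_F$.
   Context: Fix an integer $k\ge 1$ and signs $\varepsilon_1,\dots,\varepsilon_k\in\{\pm1\}$. Let $f_1,\dots,f_k:\mathbb R\to\mathbb R$ be smooth, $F=(f_1,\dots,f_k)$. On $\mathbb R^{3k+2}$ with coordinates $(u_0,\dots,u_k,v_0,\dots,v_k,s_1,\dots,s_k)$ let $g_F$ be the symmetric metric whose only nonzero components on coordinate vector fields are (up to symmetry), for $1\le i\le k$ and $0\le i',j\le k$: $g_F(\partial_{u_0},\partial_{u_i})=2f_i(u_i)s_i$, $g_F(\partial_{u_i},\partial_{u_i})=-2u_0s_i$, $g_F(\partial_{u_{i'}},\partial_{v_j})=\delta_{i'j}$, $g_F(\partial_{s_i},\partial_{s_i})=\varepsilon_i$; $\mathcal M_F=(\mathbb R^{3k+2},g_F)$. $\nabla$ is the Levi-Civita connection, $R(X,Y,Z,W)=g_F(\nabla_X\nabla_YZ-\nabla_Y\nabla_XZ-\nabla_{[X,Y]}Z,W)$,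 and $\nabla^\ell R(X_1,\dots,X_4;Y_1,\dots,Y_\ell)=(\nabla_{Y_\ell}\nabla^{\ell-1}R)(X_1,\dots,X_4;Y_1,\dots,Y_{\ell-1})$. A normalized basis of $(T_P\mathcal M_F,g_F|_P,R_P)$ is a basis $\{U_0,\dots,U_k,V_0,\dots,V_k,S_1,\dots,S_k\}$ on which the only nonzero values of $g_F|_P$ on pairs of basis vectors are $g(U_i,V_i)=1$ ($0\le i\le k$) and $g(S_i,S_i)=\varepsilon_i$ ($1\le i\le k$), and the only nonzero values of $R_P$ on 4-tuples of basis vectors are those obtained from $R(U_0,U_i,U_i,S_i)=1$ ($1\le i\le k$) via the curvature symmetries $R(x,y,z,w)=-R(y,x,z,w)=R(z,w,x,y)$. *)

theory Defs
  imports "HOL-Analysis.Analysis"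
begin

text \<open>Points and tangent vectors are functions nat => real; only the components
with index < N are relevant. A metric is given by its components
g x a b = g(d_a, d_b) at the point x.\<close>

definition pd :: "nat \<Rightarrow> ((nat \<Rightarrow> real) \<Rightarrow> real) \<Rightarrow> (nat \<Rightarrow> real) \<Rightarrow> real" where
  "pd a h x = deriv (\<lambda>t. h (x(a := x a + t))) 0"

definition ginv :: "nat \<Rightarrow> ((nat \<Rightarrow> real) \<Rightarrow> nat \<Rightarrow> nat \<Rightarrow> real) \<Rightarrow> (nat \<Rightarrow> real) \<Rightarrow> nat \<Rightarrow> nat \<Rightarrow> real" where
  "ginv N g x = (SOME h. \<forall>a<N. \<forall>b<N. (\<Sum>c<N. g x a c * h c b) = (if a = b then 1 else 0))"

text \<open>Christoffel symbols Gamma^c_{ab}: nabla_{d_a} d_b = sum_c Gamma^c_{ab} d_c.\<close>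
definition chr :: "nat \<Rightarrow> ((nat \<Rightarrow> real) \<Rightarrow> nat \<Rightarrow> nat \<Rightarrow> real) \<Rightarrow> nat \<Rightarrow> nat \<Rightarrow> nat \<Rightarrow> (nat \<Rightarrow> real) \<Rightarrow> real" where
  "chr N g c a b x = 1/2 * (\<Sum>d<N. ginv N g x c d *
      (pd a (\<lambda>y. g y b d) x + pd b (\<lambda>y. g y a d) x - pd d (\<lambda>y. g y a b) x))"

text \<open>Covariant tensor fields: components T x [i1,...,im].\<close>
type_synonym tfield = "(nat \<Rightarrow> real) \<Rightarrow> nat list \<Rightarrow> real"

text \<open>R(d_a,d_b,d_c,d_d) = g(nabla_a nabla_b d_c - nabla_b nabla_a d_c, d_d).\<close>
definition curv :: "nat \<Rightarrow> ((nat \<Rightarrow> real) \<Rightarrow> nat \<Rightarrow> nat \<Rightarrow> real) \<Rightarrow> tfield" where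
  "curv N g y is = (case is of
      [a, b, c, d] \<Rightarrow> (\<Sum>f<N. g y f d *
          (pd a (chr N g f b c) y - pd b (chr N g f a c) y
           + (\<Sum>e<N. chr N g e b c y * chr N g f a e y - chr N g e a c y * chr N g f b e y)))
    | _ \<Rightarrow> 0)"

text \<open>Covariant derivative; the differentiation direction is the LAST slot:
(nabla T)(X_1..X_m; Y) = (nabla_Y T)(X_1..X_m).\<close>
definition cov :: "nat \<Rightarrow> ((nat \<Rightarrow> real) \<Rightarrow> nat \<Rightarrow> nat \<Rightarrow> real) \<Rightarrow> tfield \<Rightarrow> tfield" where
  "cov N g T y is = (let a = last is; js = butlast is in
      pd a (\<lambda>z. T z js) y
      - (\<Sum>p<length js. \<Sum>c<N. chr N g c a (js ! p) y * T y (js[p := c])))"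

definition teval :: "nat \<Rightarrow> tfield \<Rightarrow> (nat \<Rightarrow> real) \<Rightarrow> (nat \<Rightarrow> real) list \<Rightarrow> real" where
  "teval N T y Xs = (\<Sum>is \<in> {is. length is = length Xs \<and> set is \<subseteq> {..<N}}.
      T y is * (\<Prod>p<length Xs. (Xs ! p) (is ! p)))"

definition gval :: "nat \<Rightarrow> ((nat \<Rightarrow> real) \<Rightarrow> nat \<Rightarrow> nat \<Rightarrow> real) \<Rightarrow> (nat \<Rightarrow> real) \<Rightarrow> (nat \<Rightarrow> real) \<Rightarrow> (nat \<Rightarrow> real) \<Rightarrow> real" where
  "gval N g y X Y = (\<Sum>a<N. \<Sum>b<N. g y a b * X a * Y b)"

text \<open>Coordinates: u_i has index i (0 <= i <= k), v_i has index k+1+i (0 <= i <= k),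
s_i has index 2k+1+i (1 <= i <= k). Dimension 3k+2.\<close>

definition dimF :: "nat \<Rightarrow> nat" where "dimF k = 3 * k + 2"

definition gF :: "nat \<Rightarrow> (nat \<Rightarrow> real \<Rightarrow> real) \<Rightarrow> (nat \<Rightarrow> real) \<Rightarrow> (nat \<Rightarrow> real) \<Rightarrow> nat \<Rightarrow> nat \<Rightarrow> real" where
  "gF k F eps x a b =
    (if a = 0 \<and> 1 \<le> b \<and> b \<le> k then 2 * F b (x b) * x (2 * k + 1 + b)
     else if b = 0 \<and> 1 \<le> a \<and> a \<le> k then 2 * F a (x a) * x (2 * k + 1 + a)
     else if a = b \<and> 1 \<le> a \<and> a \<le> k then - 2 * x 0 * x (2 * k + 1 + a)
     else if a \<le> k \<and> b = k + 1 + a then 1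
     else if b \<le> k \<and> a = k + 1 + b then 1
     else if a = b \<and> 2 * k + 2 \<le> a \<and> a \<le> 3 * k + 1 then eps (a - (2 * k + 1))
     else 0)"

text \<open>Model values of the metric on a normalized basis, indexed like the coordinates:
U_i = B i, V_i = B (k+1+i), S_i = B (2k+1+i).\<close>
definition gmodel :: "nat \<Rightarrow> (nat \<Rightarrow> real) \<Rightarrow> nat \<Rightarrow> nat \<Rightarrow> real" where
  "gmodel k eps a b =
    (if a \<le> k \<and> b = k + 1 + a then 1
     else if b \<le> k \<and> a = k + 1 + b then 1
     else if a = b \<and> 2 * k + 2 \<le> a \<and> a \<le> 3 * k + 1 then eps (a - (2 * k + 1))
     else 0)"

text \<open>Model values of the curvature: the orbit of R(U_0,U_i,U_i,S_i) = 1 under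
R(x,y,z,w) = -R(y,x,z,w) = R(z,w,x,y) (hence also = -R(x,y,w,z)), all other values 0.\<close>
definition Rmodel :: "nat \<Rightarrow> nat \<Rightarrow> nat \<Rightarrow> nat \<Rightarrow> nat \<Rightarrow> real" where
  "Rmodel k a b c d =
    (\<Sum>i\<in>{1..k}. let s = 2 * k + 1 + i in
       (if (a, b, c, d) = (0, i, i, s) then 1 else 0)
     + (if (a, b, c, d) = (i, 0, i, s) then -1 else 0)
     + (if (a, b, c, d) = (0, i, s, i) then -1 else 0)
     + (if (a, b, c, d) = (i, 0, s, i) then 1 else 0)
     + (if (a, b, c, d) = (i, s, 0, i) then 1 else 0)
     + (if (a, b, c, d) = (s, i, 0, i) then -1 else 0)
     + (if (a, b, c, d) = (i, s, i, 0) then -1 else 0)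
     + (if (a, b, c, d) = (s, i, i, 0) then 1 else 0))"

definition normalized_basis ::
  "nat \<Rightarrow> (nat \<Rightarrow> real \<Rightarrow> real) \<Rightarrow> (nat \<Rightarrow> real) \<Rightarrow> (nat \<Rightarrow> real) \<Rightarrow> (nat \<Rightarrow> nat \<Rightarrow> real) \<Rightarrow> bool" where
  "normalized_basis k F eps P B \<longleftrightarrow>
     (\<forall>c. (\<forall>j<dimF k. (\<Sum>i<dimF k. c i * B i j) = 0) \<longrightarrow> (\<forall>i<dimF k. c i = 0)) \<and>
     (\<forall>a<dimF k. \<forall>b<dimF k. gval (dimF k) (gF k F eps) P (B a) (B b) = gmodel k eps a b) \<and>
     (\<forall>a<dimF k. \<forall>b<dimF k. \<forall>c<dimF k. \<forall>d<dimF k.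
        teval (dimF k) (curv (dimF k) (gF k F eps)) P [B a, B b, B c, B d] = Rmodel k a b c d)"

definition beta :: "nat \<Rightarrow> (nat \<Rightarrow> real \<Rightarrow> real) \<Rightarrow> (nat \<Rightarrow> real) \<Rightarrow> nat \<Rightarrow> (nat \<Rightarrow> real) \<Rightarrow> (nat \<Rightarrow> nat \<Rightarrow> real) \<Rightarrow> real" where
  "beta k F eps l P B =
    (let N = dimF k; g = gF k F eps; R = curv N g in
     (\<Sum>j\<in>{1..k}.
        teval N ((cov N g ^^ l) R) P ([B 0, B j, B j, B (2 * k + 1 + j)] @ replicate l (B j))
        / (teval N (cov N g R) P [B 0, B j, B j, B (2 * k + 1 + j), B j]) ^ l))"

definition smooth_real :: "(real \<Rightarrow> real) \<Rightarrow> bool" where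
  "smooth_real f \<longleftrightarrow> (\<forall>n x. ((deriv ^^ n) f) differentiable (at x))"

end

theory Submission
  imports Defs "Jordan_Normal_Form.Determinant"
begin

lemma sum_single:
  assumes "finite S" "x \<in> S" "\<And>y. y \<in> S \<Longrightarrow> y \<noteq> x \<Longrightarrow> f y = 0"
  shows "sum f S = f x"
proof -
  have "sum f S = f x + sum f (S - {x})" using assms by (simp add: sum.remove)
  also have "sum f (S - {x}) = 0" using assms by (intro sum.neutral) auto
  finally show ?thesis by simp
qed

lemma sum_zero: "(\<And>y. y \<in> S \<Longrightarrow> f y = 0) \<Longrightarrow> sum f S = 0"
  by (rule sum.neutral) auto

lemma sum_split3:
  fixes k :: nat and h :: "nat \<Rightarrow> 'a::comm_monoid_add"
  shows "(\<Sum>n<3*k+2. h n) = (\<Sum>a<k+1. h a) + (\<Sum>a<k+1. h (k+1+a)) + (\<Sum>i<k. h (2*k+2+i))"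
proof -
  have "(\<Sum>n<3*k+2. h n) = sum h {0..<k+1} + sum h {k+1..<2*k+2} + sum h {2*k+2..<3*k+2}"
    by (simp only: sum.atLeastLessThan_concat lessThan_atLeast0 flip: )
  moreover have "sum h {k+1..<2*k+2} = (\<Sum>a<k+1. h (k+1+a))"
    using sum.shift_bounds_nat_ivl[of h 0 "k+1" "k+1"] by (simp add: atLeast0LessThan add.commute mult_2)
  moreover have "sum h {2*k+2..<3*k+2} = (\<Sum>i<k. h (2*k+2+i))"
    using sum.shift_bounds_nat_ivl[of h 0 "2*k+2" "k"] by (simp add: atLeast0LessThan add.commute)
  ultimately show ?thesis by (simp add: atLeast0LessThan)
qed

lemma idx_cases:
  fixes n k :: nat
  assumes "n < 3*k+2"
  obtains "n = 0" | i where "1 \<le> i" "i \<le> k" "n = i" | m where "m \<le> k" "n = k+1+m"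
    | i where "1 \<le> i" "i \<le> k" "n = 2*k+1+i"
proof -
  consider "n = 0" | "1 \<le> n \<and> n \<le> k" | "k+1 \<le> n \<and> n \<le> 2*k+1" | "2*k+2 \<le> n" by linarith
  then show ?thesis
  proof cases
    case 3 then show ?thesis using that(3)[of "n-(k+1)"] by auto
  next
    case 4 then show ?thesis using that(4)[of "n-(2*k+1)"] assms by auto
  qed (use that in auto)
qed

definition Ginv :: "nat \<Rightarrow> (nat \<Rightarrow> real \<Rightarrow> real) \<Rightarrow> (nat \<Rightarrow> real) \<Rightarrow> (nat \<Rightarrow> real) \<Rightarrow> nat \<Rightarrow> nat \<Rightarrow> real" where
 "Ginv k F eps x c d = (if c \<le> k \<and> d = k+1+c then 1 else if d \<le> k \<and> c = k+1+d then 1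
   else if k+1 \<le> c \<and> c \<le> 2*k+1 \<and> k+1 \<le> d \<and> d \<le> 2*k+1 then - gF k F eps x (c-(k+1)) (d-(k+1))
   else if c = d \<and> 2*k+2 \<le> c \<and> c \<le> 3*k+1 then eps (c-(2*k+1)) else 0)"

lemma sum_split4:
  fixes k :: nat and h :: "nat \<Rightarrow> 'a::comm_monoid_add"
  shows "(\<Sum>n<3*k+2. h n) = h 0 + (\<Sum>i\<in>{1..k}. h i) + (\<Sum>m\<in>{..k}. h (k+1+m)) + (\<Sum>i\<in>{1..k}. h (2*k+1+i))"
proof -
  have 1: "(\<Sum>a<k+1. h a) = h 0 + (\<Sum>i\<in>{1..k}. h i)"
    by (simp add: sum.atLeast1_atMost_eq lessThan_Suc_atMost sum.atMost_shift)
  have 2: "(\<Sum>i<k. h (2*k+2+i)) = (\<Sum>i\<in>{1..k}. h (2*k+1+i))"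
    by (simp add: sum.atLeast1_atMost_eq)
  show ?thesis unfolding sum_split3 1 2 by (simp add: lessThan_Suc_atMost)
qed

lemma dimF_eq: "dimF k = 3*k+2" by (simp add: dimF_def)

lemma ifz_mult1: "(if P then x else 0) * (y::real) = (if P then x * y else 0)" by simp
lemma ifz_mult2: "(y::real) * (if P then x else 0) = (if P then y * x else 0)" by simp
lemma ifz_nest: "(if P then (if Q then x else 0) else (0::real)) = (if P \<and> Q then x else 0)" by simp
lemma ifz_neg: "- (if P then x else (0::real)) = (if P then - x else 0)" by simp
lemma sum_delta_conj1: "finite S \<Longrightarrow> (\<Sum>m\<in>S. if m = a \<and> P m then f m else (0::real)) = (if a \<in> S \<and> P a then f a else 0)"
proof -
  assume fin: "finite S"
  have "(\<Sum>m\<in>S. if m = a \<and> P m then f m else (0::real)) = (\<Sum>m\<in>S. if m = a then (if P a then f a else 0) else 0)"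
    by (rule sum.cong) auto
  also have "\<dots> = (if a \<in> S \<and> P a then f a else 0)" using fin by (simp only: sum.delta) auto
  finally show ?thesis .
qed
lemma sum_delta_conj2: "finite S \<Longrightarrow> (\<Sum>m\<in>S. if a = m \<and> P m then f m else (0::real)) = (if a \<in> S \<and> P a then f a else 0)"
  using sum_delta_conj1[of S a P f] by (simp add: eq_commute)
lemma Suc0_le_iff: "(Suc 0 \<le> m) = (m \<noteq> (0::nat))" by auto
lemmas ifz = Suc0_le_iff ifz_mult1 ifz_mult2 ifz_nest ifz_neg sum_delta_conj1 sum_delta_conj2

locale MF =
  fixes k :: nat and F :: "nat \<Rightarrow> real \<Rightarrow> real" and eps :: "nat \<Rightarrow> real"
  assumes k1: "k \<ge> 1" and epsv: "\<forall>j\<in>{1..k}. eps j = 1 \<or> eps j = -1"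
    and sm: "\<forall>j\<in>{1..k}. smooth_real (F j)"
begin

lemma eps_sq: "1 \<le> i \<Longrightarrow> i \<le> k \<Longrightarrow> eps i * eps i = 1"
proof -
  assume "1 \<le> i" "i \<le> k"
  then have "eps i = 1 \<or> eps i = -1" using epsv by auto
  then show ?thesis by auto
qed

lemma gF_sym: "gF k F eps x a b = gF k F eps x b a"
  unfolding gF_def by auto

lemma Ginv_sym: "Ginv k F eps x a b = Ginv k F eps x b a"
  unfolding Ginv_def using gF_sym by auto

lemma gF_00: "gF k F eps x 0 0 = 0" by (simp add: gF_def)
lemma gF_0i: "1 \<le> i \<Longrightarrow> i \<le> k \<Longrightarrow> gF k F eps x 0 i = 2 * F i (x i) * x (Suc (2*k+i))" by (simp add: gF_def)
lemma gF_i0: "1 \<le> i \<Longrightarrow> i \<le> k \<Longrightarrow> gF k F eps x i 0 = 2 * F i (x i) * x (Suc (2*k+i))" by (simp add: gF_def)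
lemma gF_ij: "1 \<le> i \<Longrightarrow> i \<le> k \<Longrightarrow> 1 \<le> j \<Longrightarrow> j \<le> k \<Longrightarrow> gF k F eps x i j = (if i = j then - 2 * x 0 * x (Suc (2*k+i)) else 0)" by (simp add: gF_def)
lemma gF_uv: "a \<le> k \<Longrightarrow> m \<le> k \<Longrightarrow> gF k F eps x a (Suc (k+m)) = (if a = m then 1 else 0)" by (simp add: gF_def)
lemma gF_vu: "a \<le> k \<Longrightarrow> m \<le> k \<Longrightarrow> gF k F eps x (Suc (k+m)) a = (if a = m then 1 else 0)" by (simp add: gF_def)
lemma gF_us: "a \<le> k \<Longrightarrow> 1 \<le> i \<Longrightarrow> gF k F eps x a (Suc (2*k+i)) = 0" by (simp add: gF_def)
lemma gF_su: "a \<le> k \<Longrightarrow> 1 \<le> i \<Longrightarrow> gF k F eps x (Suc (2*k+i)) a = 0" by (simp add: gF_def)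
lemma gF_vv: "m \<le> k \<Longrightarrow> m' \<le> k \<Longrightarrow> gF k F eps x (Suc (k+m)) (Suc (k+m')) = 0" by (simp add: gF_def)
lemma gF_vs: "m \<le> k \<Longrightarrow> 1 \<le> i \<Longrightarrow> gF k F eps x (Suc (k+m)) (Suc (2*k+i)) = 0" by (simp add: gF_def)
lemma gF_sv: "m \<le> k \<Longrightarrow> 1 \<le> i \<Longrightarrow> gF k F eps x (Suc (2*k+i)) (Suc (k+m)) = 0" by (simp add: gF_def)
lemma gF_ss: "1 \<le> i \<Longrightarrow> i \<le> k \<Longrightarrow> 1 \<le> j \<Longrightarrow> j \<le> k \<Longrightarrow> gF k F eps x (Suc (2*k+i)) (Suc (2*k+j)) = (if i = j then eps i else 0)" by (simp add: gF_def)
lemmas gF_vals = gF_00 gF_0i gF_i0 gF_ij gF_uv gF_vu gF_us gF_su gF_vv gF_vs gF_sv gF_ss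

lemma Gi_uu: "a \<le> k \<Longrightarrow> b \<le> k \<Longrightarrow> Ginv k F eps x a b = 0" by (simp add: Ginv_def)
lemma Gi_uv: "a \<le> k \<Longrightarrow> m \<le> k \<Longrightarrow> Ginv k F eps x a (Suc (k+m)) = (if a = m then 1 else 0)" by (simp add: Ginv_def)
lemma Gi_vu: "a \<le> k \<Longrightarrow> m \<le> k \<Longrightarrow> Ginv k F eps x (Suc (k+m)) a = (if a = m then 1 else 0)" by (simp add: Ginv_def)
lemma Gi_us: "a \<le> k \<Longrightarrow> 1 \<le> i \<Longrightarrow> Ginv k F eps x a (Suc (2*k+i)) = 0" by (simp add: Ginv_def)
lemma Gi_su: "a \<le> k \<Longrightarrow> 1 \<le> i \<Longrightarrow> Ginv k F eps x (Suc (2*k+i)) a = 0" by (simp add: Ginv_def)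
lemma Gi_vv: "m \<le> k \<Longrightarrow> m' \<le> k \<Longrightarrow> Ginv k F eps x (Suc (k+m)) (Suc (k+m')) = - gF k F eps x m m'" by (simp add: Ginv_def)
lemma Gi_vs: "m \<le> k \<Longrightarrow> 1 \<le> i \<Longrightarrow> Ginv k F eps x (Suc (k+m)) (Suc (2*k+i)) = 0" by (simp add: Ginv_def)
lemma Gi_sv: "m \<le> k \<Longrightarrow> 1 \<le> i \<Longrightarrow> Ginv k F eps x (Suc (2*k+i)) (Suc (k+m)) = 0" by (simp add: Ginv_def)
lemma Gi_ss: "1 \<le> i \<Longrightarrow> i \<le> k \<Longrightarrow> 1 \<le> j \<Longrightarrow> j \<le> k \<Longrightarrow> Ginv k F eps x (Suc (2*k+i)) (Suc (2*k+j)) = (if i = j then eps i else 0)" by (simp add: Ginv_def)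
lemmas Gi_vals = Gi_uu Gi_uv Gi_vu Gi_us Gi_su Gi_vv Gi_vs Gi_sv Gi_ss

lemma GGinv:
  assumes a: "a < 3*k+2" and b: "b < 3*k+2"
  shows "(\<Sum>c<3*k+2. gF k F eps x a c * Ginv k F eps x c b) = (if a = b then 1 else 0)"
  unfolding sum_split4
  by (cases rule: idx_cases[OF a]; cases rule: idx_cases[OF b]; simp add: gF_vals Gi_vals ifz eps_sq)

lemma GinvG:
  assumes a: "a < 3*k+2" and b: "b < 3*k+2"
  shows "(\<Sum>c<3*k+2. Ginv k F eps x a c * gF k F eps x c b) = (if a = b then 1 else 0)"
proof -
  have "(\<Sum>c<3*k+2. Ginv k F eps x a c * gF k F eps x c b) = (\<Sum>c<3*k+2. gF k F eps x b c * Ginv k F eps x c a)"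
    by (rule sum.cong) (auto simp: mult.commute gF_sym[of x _ b] Ginv_sym[of x a])
  also have "\<dots> = (if a = b then 1 else 0)" using GGinv[OF b a] by auto
  finally show ?thesis .
qed
lemma ginv_eq:
  assumes c: "c < dimF k" and b: "b < dimF k"
  shows "ginv (dimF k) (gF k F eps) x c b = Ginv k F eps x c b"
proof -
  let ?N = "3*k+2"
  define P where "P = (\<lambda>h. \<forall>a<?N. \<forall>b<?N. (\<Sum>c<?N. gF k F eps x a c * h c b) = (if a = b then (1::real) else 0))"
  have "P (Ginv k F eps x)" unfolding P_def using GGinv by blast
  hence "P (SOME h. P h)" by (rule someI[where P = P])
  moreover have "ginv (dimF k) (gF k F eps) x = (SOME h. P h)" unfolding ginv_def P_def dimF_eq by simp
  ultimately have Ph: "P (ginv (dimF k) (gF k F eps) x)" by simp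
  define h where "h = ginv (dimF k) (gF k F eps) x"
  have Ph': "\<And>d. d < ?N \<Longrightarrow> (\<Sum>a<?N. gF k F eps x d a * h a b) = (if d = b then 1 else 0)"
    using Ph b unfolding P_def h_def dimF_eq by blast
  have cN: "c < ?N" and bN: "b < ?N" using c b by (auto simp: dimF_eq)
  have "h c b = (\<Sum>a<?N. (if c = a then 1 else 0) * h a b)"
    using cN by (simp add: ifz)
  also have "\<dots> = (\<Sum>a<?N. (\<Sum>d<?N. Ginv k F eps x c d * gF k F eps x d a) * h a b)"
    by (rule sum.cong[OF refl], subst GinvG[OF cN]) auto
  also have "\<dots> = (\<Sum>d<?N. Ginv k F eps x c d * (\<Sum>a<?N. gF k F eps x d a * h a b))"
    unfolding sum_distrib_left sum_distrib_right mult.assoc by (rule sum.swap)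
  also have "\<dots> = (\<Sum>d<?N. Ginv k F eps x c d * (if d = b then 1 else 0))"
    by (rule sum.cong[OF refl], subst Ph') auto
  also have "\<dots> = Ginv k F eps x c b" using bN by (simp add: ifz)
  finally show ?thesis unfolding h_def .
qed

end

definition HD :: "nat \<Rightarrow> ((nat \<Rightarrow> real) \<Rightarrow> real) \<Rightarrow> (nat \<Rightarrow> real) \<Rightarrow> real \<Rightarrow> bool" where
  "HD a h y D \<longleftrightarrow> ((\<lambda>t. h (y(a := y a + t))) has_real_derivative D) (at 0)"

lemma pd_HD: "HD a h y D \<Longrightarrow> pd a h y = D"
  unfolding HD_def pd_def by (rule DERIV_imp_deriv)

lemma pd_if: "pd a (\<lambda>z. if P then h1 z else h2 z) y = (if P then pd a h1 y else pd a h2 y)"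
  by (cases P) auto

lemma HD_const: "HD a (\<lambda>z. c) y 0"
  unfolding HD_def by simp

lemma HD_coord: "HD a (\<lambda>z. z j) y (if j = a then 1 else 0)"
  unfolding HD_def by (cases "j = a") (auto intro!: derivative_eq_intros)

lemma HD_add: "HD a h1 y D1 \<Longrightarrow> HD a h2 y D2 \<Longrightarrow> HD a (\<lambda>z. h1 z + h2 z) y (D1 + D2)"
  unfolding HD_def by (rule DERIV_add)

lemma HD_diff: "HD a h1 y D1 \<Longrightarrow> HD a h2 y D2 \<Longrightarrow> HD a (\<lambda>z. h1 z - h2 z) y (D1 - D2)"
  unfolding HD_def by (rule DERIV_diff)

lemma HD_minus: "HD a h1 y D1 \<Longrightarrow> HD a (\<lambda>z. - h1 z) y (- D1)"
  unfolding HD_def by (rule DERIV_minus)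

lemma HD_mult: "HD a h1 y D1 \<Longrightarrow> HD a h2 y D2 \<Longrightarrow> HD a (\<lambda>z. h1 z * h2 z) y (D1 * h2 y + h1 y * D2)"
  unfolding HD_def by (drule DERIV_mult) (auto simp: mult.commute)

lemma HD_sum: "finite S \<Longrightarrow> (\<And>n. n \<in> S \<Longrightarrow> HD a (\<lambda>z. h z n) y (D n)) \<Longrightarrow> HD a (\<lambda>z. \<Sum>n\<in>S. h z n) y (\<Sum>n\<in>S. D n)"
  unfolding HD_def by (rule DERIV_sum)

lemma HD_comp:
  assumes "\<phi> differentiable (at (y j))"
  shows "HD a (\<lambda>z. \<phi> (z j)) y (if j = a then deriv \<phi> (y j) else 0)"
proof (cases "j = a")
  case True
  have "(\<phi> has_real_derivative deriv \<phi> (y j)) (at (0 + y j))"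
    using assms DERIV_deriv_iff_real_differentiable by auto
  then have "((\<lambda>t. \<phi> (t + y j)) has_real_derivative deriv \<phi> (y j)) (at 0)"
    by (simp only: DERIV_shift)
  then show ?thesis using True unfolding HD_def by (simp add: add.commute)
next
  case False
  then show ?thesis unfolding HD_def by simp
qed

lemma smooth_diff: "smooth_real f \<Longrightarrow> ((deriv ^^ n) f) differentiable (at x)"
  unfolding smooth_real_def by blast

lemma smooth_diff0: "smooth_real f \<Longrightarrow> f differentiable (at x)"
  using smooth_diff[of f 0] by simp

lemma smooth_diff1: "smooth_real f \<Longrightarrow> (deriv f) differentiable (at x)"
  using smooth_diff[of f 1] by simp

lemma smooth_diff2: "smooth_real f \<Longrightarrow> (deriv (deriv f)) differentiable (at x)"
  using smooth_diff[of f 2] by (simp add: numeral_2_eq_2)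

lemma HD_eq: "HD a h y D \<Longrightarrow> D = D' \<Longrightarrow> HD a h y D'" by simp

lemma pd_const: "pd a (\<lambda>z. c) y = 0"
  by (rule pd_HD[OF HD_const])

context MF
begin

lemma Fdiff: "1 \<le> i \<Longrightarrow> i \<le> k \<Longrightarrow> F i differentiable (at u)"
  using sm smooth_diff0 by auto
lemma dFdiff: "1 \<le> i \<Longrightarrow> i \<le> k \<Longrightarrow> deriv (F i) differentiable (at u)"
  using sm smooth_diff1 by auto
lemma ddFdiff: "1 \<le> i \<Longrightarrow> i \<le> k \<Longrightarrow> deriv (deriv (F i)) differentiable (at u)"
  using sm smooth_diff2 by auto

lemma pd_g0: "1 \<le> i \<Longrightarrow> i \<le> k \<Longrightarrow>
  pd a (\<lambda>z. 2 * F i (z i) * z j) y = 2 * (if i = a then deriv (F i) (y i) else 0) * y j + 2 * F i (y i) * (if j = a then 1 else 0)"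
  by (rule pd_HD, rule HD_eq[OF HD_mult[OF HD_mult[OF HD_const HD_comp[OF Fdiff]] HD_coord]]) auto

lemma pd_g1: "pd a (\<lambda>z. - (2 * z 0 * z j)) y = -2 * (if 0 = a then 1 else 0) * y j + -2 * y 0 * (if j = a then 1 else 0)"
  by (rule pd_HD, rule HD_eq[OF HD_minus[OF HD_mult[OF HD_mult[OF HD_const HD_coord] HD_coord]]]) auto

definition DG where
 "DG y a b d = (if b = 0 \<and> 1 \<le> d \<and> d \<le> k then (if a = d then 2 * deriv (F d) (y d) * y (Suc (2*k+d)) else if a = Suc (2*k+d) then 2 * F d (y d) else 0)
  else if d = 0 \<and> 1 \<le> b \<and> b \<le> k then (if a = b then 2 * deriv (F b) (y b) * y (Suc (2*k+b)) else if a = Suc (2*k+b) then 2 * F b (y b) else 0)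
  else if b = d \<and> 1 \<le> b \<and> b \<le> k then (if a = 0 then -2 * y (Suc (2*k+b)) else if a = Suc (2*k+b) then -2 * y 0 else 0)
  else 0)"

lemma pd_gF: "pd a (\<lambda>z. gF k F eps z b d) y = DG y a b d"
  unfolding gF_def
  apply (simp only: pd_if)
  apply (auto simp: pd_g0 pd_g1 pd_const DG_def)
  done

end

context MF
begin

definition ChrE :: "(nat \<Rightarrow> real) \<Rightarrow> nat \<Rightarrow> nat \<Rightarrow> nat \<Rightarrow> real" where
 "ChrE y c a b =
 (if c = Suc k then
    (if 1 \<le> a \<and> a \<le> k \<and> b = a then (2 * deriv (F a) (y a) + 1) * y (Suc (2*k+a))
     else if 1 \<le> a \<and> a \<le> k \<and> b = Suc (2*k+a) then F a (y a)
     else if 1 \<le> b \<and> b \<le> k \<and> a = Suc (2*k+b) then F b (y b) else 0)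
  else if Suc (Suc k) \<le> c \<and> c \<le> Suc (2*k) then
    (if (a = 0 \<and> b = c - Suc k) \<or> (a = c - Suc k \<and> b = 0) then - y (Suc (2*k+(c - Suc k)))
     else if (a = c - Suc k \<and> b = Suc (2*k+(c - Suc k))) \<or> (a = Suc (2*k+(c - Suc k)) \<and> b = c - Suc k) then - y 0
     else if (a = 0 \<and> b = Suc (2*k+(c - Suc k))) \<or> (a = Suc (2*k+(c - Suc k)) \<and> b = 0) then F (c - Suc k) (y (c - Suc k))
     else 0)
  else if Suc (Suc (2*k)) \<le> c \<and> c \<le> Suc (3*k) then
    (if a = c - Suc (2*k) \<and> b = c - Suc (2*k) then eps (c - Suc (2*k)) * y 0
     else if (a = 0 \<and> b = c - Suc (2*k)) \<or> (a = c - Suc (2*k) \<and> b = 0) then - (eps (c - Suc (2*k)) * F (c - Suc (2*k)) (y (c - Suc (2*k))))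
     else 0)
  else 0)"

lemma chr_sum:
  assumes c: "c < dimF k"
  shows "chr (dimF k) (gF k F eps) c a b y = 1/2 * (\<Sum>d<dimF k. Ginv k F eps y c d * (DG y a b d + DG y b a d - DG y d a b))"
  unfolding chr_def pd_gF
  by (rule arg_cong[where f = "\<lambda>s. 1/2 * s"], rule sum.cong[OF refl]) (simp add: ginv_eq[OF c])

lemma chr_eq:
  assumes c: "c < dimF k" and a: "a < dimF k" and b: "b < dimF k"
  shows "chr (dimF k) (gF k F eps) c a b y = ChrE y c a b"
  unfolding chr_sum[OF c] unfolding dimF_eq sum_split4
  using c a b unfolding dimF_eq
  by (cases rule: idx_cases[OF c[unfolded dimF_eq]]; cases rule: idx_cases[OF a[unfolded dimF_eq]]; cases rule: idx_cases[OF b[unfolded dimF_eq]];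
      simp add: Gi_vals ifz DG_def ChrE_def cong: if_cong; auto simp: algebra_simps intro!: sum_zero)

end

context MF
begin

lemma ChrE_u: "f \<le> k \<Longrightarrow> ChrE y f a b = 0"
  unfolding ChrE_def by auto

lemma ChrE_v0: "ChrE y (Suc k) a b =
    (if 1 \<le> a \<and> a \<le> k \<and> b = a then (2 * deriv (F a) (y a) + 1) * y (Suc (2*k+a))
     else if 1 \<le> a \<and> a \<le> k \<and> b = Suc (2*k+a) then F a (y a)
     else if 1 \<le> b \<and> b \<le> k \<and> a = Suc (2*k+b) then F b (y b) else 0)"
  unfolding ChrE_def by simp

lemma ChrE_vi: "1 \<le> i \<Longrightarrow> i \<le> k \<Longrightarrow> ChrE y (Suc (k+i)) a b =
    (if (a = 0 \<and> b = i) \<or> (a = i \<and> b = 0) then - y (Suc (2*k+i))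
     else if (a = i \<and> b = Suc (2*k+i)) \<or> (a = Suc (2*k+i) \<and> b = i) then - y 0
     else if (a = 0 \<and> b = Suc (2*k+i)) \<or> (a = Suc (2*k+i) \<and> b = 0) then F i (y i)
     else 0)"
  unfolding ChrE_def by simp

lemma ChrE_s: "1 \<le> i \<Longrightarrow> i \<le> k \<Longrightarrow> ChrE y (Suc (2*k+i)) a b =
    (if a = i \<and> b = i then eps i * y 0
     else if (a = 0 \<and> b = i) \<or> (a = i \<and> b = 0) then - (eps i * F i (y i))
     else 0)"
  unfolding ChrE_def by simp

lemma pdl1: "1 \<le> i \<Longrightarrow> i \<le> k \<Longrightarrow> pd x (\<lambda>z. (2 * deriv (F i) (z i) + 1) * z j) y =
   2 * (if i = x then deriv (deriv (F i)) (y i) else 0) * y j + (2 * deriv (F i) (y i) + 1) * (if j = x then 1 else 0)"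
  by (rule pd_HD, rule HD_eq[OF HD_mult[OF HD_add[OF HD_mult[OF HD_const HD_comp[OF dFdiff]] HD_const] HD_coord]]) auto

lemma pdl2: "1 \<le> i \<Longrightarrow> i \<le> k \<Longrightarrow> pd x (\<lambda>z. F i (z i)) y = (if i = x then deriv (F i) (y i) else 0)"
  by (rule pd_HD, rule HD_comp[OF Fdiff])

lemma pdl3: "pd x (\<lambda>z. - z j) y = - (if j = x then 1 else 0)"
  by (rule pd_HD, rule HD_minus[OF HD_coord])

lemma pdl4: "pd x (\<lambda>z. c * z j) y = c * (if j = x then 1 else 0)"
  by (rule pd_HD, rule HD_eq[OF HD_mult[OF HD_const HD_coord]]) auto

lemma pdl5: "1 \<le> i \<Longrightarrow> i \<le> k \<Longrightarrow> pd x (\<lambda>z. - (c * F i (z i))) y = - (c * (if i = x then deriv (F i) (y i) else 0))"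
  by (rule pd_HD, rule HD_eq[OF HD_minus[OF HD_mult[OF HD_const HD_comp[OF Fdiff]]]]) auto

lemmas pdl = pdl1 pdl2 pdl3 pdl4 pdl5 pd_const

lemma pd_ChrE_u: "f \<le> k \<Longrightarrow> pd x (\<lambda>z. ChrE z f a b) y = 0"
  by (simp add: ChrE_u pd_const)

lemma pd_ChrE_v0: "pd x (\<lambda>z. ChrE z (Suc k) a b) y =
    (if 1 \<le> a \<and> a \<le> k \<and> b = a then 2 * (if a = x then deriv (deriv (F a)) (y a) else 0) * y (Suc (2*k+a)) + (2 * deriv (F a) (y a) + 1) * (if Suc (2*k+a) = x then 1 else 0)
     else if 1 \<le> a \<and> a \<le> k \<and> b = Suc (2*k+a) then (if a = x then deriv (F a) (y a) else 0)
     else if 1 \<le> b \<and> b \<le> k \<and> a = Suc (2*k+b) then (if b = x then deriv (F b) (y b) else 0) else 0)"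
  unfolding ChrE_v0 pd_if by (simp add: pdl cong: if_cong)

lemma pd_ChrE_vi: "1 \<le> i \<Longrightarrow> i \<le> k \<Longrightarrow> pd x (\<lambda>z. ChrE z (Suc (k+i)) a b) y =
    (if (a = 0 \<and> b = i) \<or> (a = i \<and> b = 0) then - (if Suc (2*k+i) = x then 1 else 0)
     else if (a = i \<and> b = Suc (2*k+i)) \<or> (a = Suc (2*k+i) \<and> b = i) then - (if 0 = x then 1 else 0)
     else if (a = 0 \<and> b = Suc (2*k+i)) \<or> (a = Suc (2*k+i) \<and> b = 0) then (if i = x then deriv (F i) (y i) else 0)
     else 0)"
  unfolding ChrE_vi pd_if by (simp add: pdl cong: if_cong)

lemma pd_ChrE_s: "1 \<le> i \<Longrightarrow> i \<le> k \<Longrightarrow> pd x (\<lambda>z. ChrE z (Suc (2*k+i)) a b) y =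
    (if a = i \<and> b = i then eps i * (if 0 = x then 1 else 0)
     else if (a = 0 \<and> b = i) \<or> (a = i \<and> b = 0) then - (eps i * (if i = x then deriv (F i) (y i) else 0))
     else 0)"
  unfolding ChrE_s pd_if by (simp add: pdl cong: if_cong)

definition Af :: "nat \<Rightarrow> nat \<Rightarrow> nat \<Rightarrow> real" where
  "Af i a b = (if a = 0 \<and> b = i then 1 else if a = i \<and> b = 0 then -1 else 0)"
definition Cf :: "nat \<Rightarrow> nat \<Rightarrow> nat \<Rightarrow> real" where
  "Cf i a b = (if a = i \<and> b = Suc (2*k+i) then 1 else if a = Suc (2*k+i) \<and> b = i then -1 else 0)"
definition Ef :: "nat \<Rightarrow> nat list \<Rightarrow> real" where
  "Ef i h = Af i (h!0) (h!1) * Cf i (h!2) (h!3) + Cf i (h!0) (h!1) * Af i (h!2) (h!3)"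

definition K :: "(nat \<Rightarrow> real) \<Rightarrow> nat \<Rightarrow> nat \<Rightarrow> nat \<Rightarrow> nat \<Rightarrow> real" where
  "K y f a b c = pd a (\<lambda>z. ChrE z f b c) y - pd b (\<lambda>z. ChrE z f a c) y
     + (\<Sum>e<dimF k. ChrE y e b c * ChrE y f a e - ChrE y e a c * ChrE y f b e)"

lemma chr_fun: "f < dimF k \<Longrightarrow> a < dimF k \<Longrightarrow> b < dimF k \<Longrightarrow> chr (dimF k) (gF k F eps) f a b = (\<lambda>z. ChrE z f a b)"
  using chr_eq by auto

lemma curv_K:
  assumes "a < dimF k" "b < dimF k" "c < dimF k" "d < dimF k"
  shows "curv (dimF k) (gF k F eps) y [a,b,c,d] = (\<Sum>f<dimF k. gF k F eps y f d * K y f a b c)"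
  unfolding curv_def K_def list.case
proof (rule sum.cong[OF refl])
  fix f assume "f \<in> {..<dimF k}"
  hence f: "f < dimF k" by simp
  have e: "(\<Sum>e<dimF k. chr (dimF k) (gF k F eps) e b c y * chr (dimF k) (gF k F eps) f a e y -
             chr (dimF k) (gF k F eps) e a c y * chr (dimF k) (gF k F eps) f b e y)
        = (\<Sum>e<dimF k. ChrE y e b c * ChrE y f a e - ChrE y e a c * ChrE y f b e)"
    by (rule sum.cong[OF refl]) (simp add: chr_eq assms f)
  show "gF k F eps y f d * (pd a (chr (dimF k) (gF k F eps) f b c) y - pd b (chr (dimF k) (gF k F eps) f a c) y +
          (\<Sum>e<dimF k. chr (dimF k) (gF k F eps) e b c y * chr (dimF k) (gF k F eps) f a e y -
             chr (dimF k) (gF k F eps) e a c y * chr (dimF k) (gF k F eps) f b e y)) =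
        gF k F eps y f d * (pd a (\<lambda>z. ChrE z f b c) y - pd b (\<lambda>z. ChrE z f a c) y +
          (\<Sum>e<dimF k. ChrE y e b c * ChrE y f a e - ChrE y e a c * ChrE y f b e))"
    unfolding e by (simp add: chr_fun assms f)
qed

lemma ChrE_v: "m \<le> k \<Longrightarrow> ChrE y (Suc (k+m)) a b =
   (if m = 0 then ChrE y (Suc k) a b else ChrE y (Suc (k+m)) a b)" by simp

lemma tz_v:
  assumes e: "e < dimF k" and m: "m \<le> k" and h: "a > k \<or> b > k \<or> c > k"
  shows "ChrE y e b c * ChrE y (Suc (k+m)) a e = 0"
proof (cases rule: idx_cases[OF e[unfolded dimF_eq]])
  case 1 then show ?thesis by (simp add: ChrE_u)
next
  case (2 i) then show ?thesis by (simp add: ChrE_u)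
next
  case (3 m')
  show ?thesis
  proof (cases "m = 0")
    case True then show ?thesis using 3 m by (simp add: ChrE_v0)
  next
    case False then show ?thesis using 3 m by (simp add: ChrE_vi)
  qed
next
  case (4 j)
  show ?thesis
  proof (cases "m = 0")
    case True then show ?thesis using 4 m h by (auto simp add: ChrE_v0 ChrE_s)
  next
    case False then show ?thesis using 4 m h by (auto simp add: ChrE_vi ChrE_s)
  qed
qed

lemma tz_s:
  assumes e: "e < dimF k" and i: "1 \<le> i" "i \<le> k"
  shows "ChrE y e b c * ChrE y (Suc (2*k+i)) a e = 0"
proof (cases "e \<le> k")
  case True then show ?thesis by (simp add: ChrE_u)
next
  case False then show ?thesis using i by (simp add: ChrE_s)
qed

lemma K_u: "f \<le> k \<Longrightarrow> K y f a b c = 0"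
  unfolding K_def by (simp add: ChrE_u pd_const)

lemma K_s: "1 \<le> i \<Longrightarrow> i \<le> k \<Longrightarrow> K y (Suc (2*k+i)) a b c =
   pd a (\<lambda>z. ChrE z (Suc (2*k+i)) b c) y - pd b (\<lambda>z. ChrE z (Suc (2*k+i)) a c) y"
  unfolding K_def by (simp add: tz_s)

lemma K_v: "m \<le> k \<Longrightarrow> a > k \<or> b > k \<or> c > k \<Longrightarrow> K y (Suc (k+m)) a b c =
   pd a (\<lambda>z. ChrE z (Suc (k+m)) b c) y - pd b (\<lambda>z. ChrE z (Suc (k+m)) a c) y"
proof -
  assume m: "m \<le> k" and h: "a > k \<or> b > k \<or> c > k"
  have "\<And>e. e \<in> {..<dimF k} \<Longrightarrow> ChrE y e b c * ChrE y (Suc (k+m)) a e - ChrE y e a c * ChrE y (Suc (k+m)) b e = 0"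
  proof -
    fix e assume "e \<in> {..<dimF k}"
    then have e: "e < dimF k" by simp
    have 1: "ChrE y e b c * ChrE y (Suc (k+m)) a e = 0" by (rule tz_v[OF e m h])
    have 2: "ChrE y e a c * ChrE y (Suc (k+m)) b e = 0" by (rule tz_v[OF e m]) (use h in auto)
    show "ChrE y e b c * ChrE y (Suc (k+m)) a e - ChrE y e a c * ChrE y (Suc (k+m)) b e = 0" using 1 2 by (simp only: diff_self)
  qed
  then show ?thesis unfolding K_def by (simp add: sum_zero)
qed

lemma curv_base:
  assumes a: "a < dimF k" and b: "b < dimF k" and c: "c < dimF k" and d: "d < dimF k"
    and h: "a > k \<or> b > k \<or> c > k \<or> d > k"
  shows "curv (dimF k) (gF k F eps) y [a,b,c,d] = (\<Sum>i\<in>{1..k}. Ef i [a,b,c,d] * (1 + deriv (F i) (y i)))"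
  unfolding curv_K[OF a b c d] unfolding dimF_eq sum_split4
  using h
  by (cases rule: idx_cases[OF a[unfolded dimF_eq]]; cases rule: idx_cases[OF b[unfolded dimF_eq]];
      cases rule: idx_cases[OF c[unfolded dimF_eq]]; cases rule: idx_cases[OF d[unfolded dimF_eq]];
      simp add: gF_vals K_u K_s K_v pd_ChrE_v0 pd_ChrE_vi pd_ChrE_s ifz Ef_def Af_def Cf_def eps_sq cong: if_cong;
      auto simp: algebra_simps eps_sq intro!: sum_zero)

end

context MF
begin

definition Dl :: "nat \<Rightarrow> nat \<Rightarrow> real \<Rightarrow> real" where
  "Dl l i u = (if l = 0 then 1 + deriv (F i) u else (deriv ^^ Suc l) (F i) u)"

definition Form :: "nat \<Rightarrow> (nat \<Rightarrow> real) \<Rightarrow> nat list \<Rightarrow> real" where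
  "Form l y is = (\<Sum>i\<in>{1..k}. Ef i is * (if \<forall>p\<in>{4..<length is}. is!p = i then Dl l i (y i) else 0))"

lemma HD_Dl:
  assumes i: "1 \<le> i" "i \<le> k"
  shows "HD a (\<lambda>z. Dl l i (z i)) y (if i = a then Dl (Suc l) i (y i) else 0)"
proof (cases "l = 0")
  case True
  have e1: "(\<lambda>z. Dl l i (z i)) = (\<lambda>z. 1 + deriv (F i) (z i))" using True by (simp add: Dl_def)
  have e2: "\<And>u. Dl (Suc l) i u = deriv (deriv (F i)) u" using True by (simp add: Dl_def numeral_2_eq_2)
  show ?thesis unfolding e1 e2
    by (rule HD_eq[OF HD_add[OF HD_const HD_comp[OF dFdiff[OF i]]]]) simp
next
  case False
  have "smooth_real (F i)" using sm i by auto
  from smooth_diff[OF this, of "Suc l" "y i"]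
  have dd: "(deriv ^^ Suc l) (F i) differentiable (at (y i))" .
  have e1: "(\<lambda>z. Dl l i (z i)) = (\<lambda>z. (deriv ^^ Suc l) (F i) (z i))" using False by (simp add: Dl_def)
  have e2: "\<And>u. Dl (Suc l) i u = deriv ((deriv ^^ Suc l) (F i)) u" by (simp add: Dl_def)
  show ?thesis unfolding e1 e2 by (rule HD_comp[where \<phi>="(deriv ^^ Suc l) (F i)" and y=y and j=i, OF dd])
qed

lemma Ef_app: "4 \<le> length js \<Longrightarrow> Ef i (js @ xs) = Ef i js"
proof -
  assume js: "4 \<le> length js"
  have "\<And>n. n < 4 \<Longrightarrow> (js @ xs) ! n = js ! n" using js by (auto simp: nth_append)
  then show ?thesis unfolding Ef_def by (simp add: numeral_eq_Suc)
qed

lemma Form_pd: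
  assumes js: "4 \<le> length js"
  shows "pd a (\<lambda>z. Form l z js) y = Form (Suc l) y (js @ [a])"
proof -
  let ?C = "\<lambda>i. \<forall>p\<in>{4..<length js}. js!p = i"
  have "HD a (\<lambda>z. Form l z js) y
     (\<Sum>i\<in>{1..k}. Ef i js * (if ?C i then (if i = a then Dl (Suc l) i (y i) else 0) else 0))"
    unfolding Form_def
  proof (rule HD_sum)
    fix i assume "i \<in> {1..k}"
    then have i: "1 \<le> i" "i \<le> k" by auto
    show "HD a (\<lambda>z. Ef i js * (if ?C i then Dl l i (z i) else 0)) y
            (Ef i js * (if ?C i then (if i = a then Dl (Suc l) i (y i) else 0) else 0))"
    proof (cases "?C i")
      case True
      show ?thesis unfolding if_P[OF True] by (rule HD_eq[OF HD_mult[OF HD_const HD_Dl[OF i]]]) simp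
    next
      case False
      show ?thesis unfolding if_not_P[OF False] mult_zero_right by (rule HD_const)
    qed
  qed simp
  then have "pd a (\<lambda>z. Form l z js) y = (\<Sum>i\<in>{1..k}. Ef i js * (if ?C i then (if i = a then Dl (Suc l) i (y i) else 0) else 0))"
    by (rule pd_HD)
  also have "\<dots> = Form (Suc l) y (js @ [a])"
    unfolding Form_def
  proof (rule sum.cong[OF refl])
    fix i
    have "(\<forall>p\<in>{4..<length (js @ [a])}. (js @ [a]) ! p = i) = (?C i \<and> a = i)"
    proof
      assume H: "\<forall>p\<in>{4..<length (js @ [a])}. (js @ [a]) ! p = i"
      have "a = i" using H[rule_format, of "length js"] js by simp
      moreover have "?C i"
      proof
        fix p assume "p \<in> {4..<length js}"
        then show "js ! p = i" using H[rule_format, of p] by (simp add: nth_append)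
      qed
      ultimately show "?C i \<and> a = i" by simp
    next
      assume "?C i \<and> a = i"
      then show "\<forall>p\<in>{4..<length (js @ [a])}. (js @ [a]) ! p = i"
        by (auto simp: nth_append less_Suc_eq)
    qed
    then show "Ef i js * (if ?C i then (if i = a then Dl (Suc l) i (y i) else 0) else 0) =
          Ef i (js @ [a]) * (if \<forall>p\<in>{4..<length (js @ [a])}. (js @ [a]) ! p = i then Dl (Suc l) i (y i) else 0)"
      using js by (auto simp: Ef_app)
  qed
  finally show ?thesis .
qed

lemma lt4: "(p::nat) < 4 \<Longrightarrow> p = 0 \<or> p = 1 \<or> p = 2 \<or> p = 3" by auto

lemma Ef_nz_s:
  assumes "Ef i h \<noteq> 0" "1 \<le> i" "i \<le> k" "p < 4" "h!p > k"
  shows "h!p = Suc (2*k+i)"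
  using lt4[OF assms(4)] assms unfolding Ef_def Af_def Cf_def
  by (auto split: if_splits)

lemma Ef_nz_two:
  assumes "Ef i h \<noteq> 0" "1 \<le> i" "i \<le> k" "p < 4" "q < 4" "p \<noteq> q" "h!p > k" "h!q > k"
  shows False
  using lt4[OF assms(4)] lt4[OF assms(5)] assms unfolding Ef_def Af_def Cf_def
  by (auto split: if_splits)

lemma cov_app: "cov N g T y (js @ [a]) =
   pd a (\<lambda>z. T z js) y - (\<Sum>p<length js. \<Sum>c<N. chr N g c a (js ! p) y * T y (js[p := c]))"
  unfolding cov_def Let_def by simp

lemma INV:
  "\<forall>y is. length is = 4 + l \<longrightarrow> set is \<subseteq> {..<dimF k} \<longrightarrow> (\<exists>p<4. is!p > k) \<longrightarrow>
     (cov (dimF k) (gF k F eps) ^^ l) (curv (dimF k) (gF k F eps)) y is = Form l y is"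
proof (induction l)
  case 0
  show ?case
  proof (intro allI impI)
    fix y and "is" :: "nat list"
    assume len: "length is = 4 + 0" and st: "set is \<subseteq> {..<dimF k}" and ex: "\<exists>p<4. is!p > k"
    obtain a b c d where isq: "is = [a,b,c,d]" using len
      by (auto simp: length_Suc_conv numeral_eq_Suc)
    have abcd: "a < dimF k" "b < dimF k" "c < dimF k" "d < dimF k" using st isq by auto
    obtain p where p: "p < 4" "is!p > k" using ex by auto
    have h: "a > k \<or> b > k \<or> c > k \<or> d > k" using lt4[OF p(1)] p(2) isq
      by (elim disjE) (auto simp: numeral_2_eq_2 numeral_3_eq_3)
    show "(cov (dimF k) (gF k F eps) ^^ 0) (curv (dimF k) (gF k F eps)) y is = Form 0 y is"
      unfolding isq using curv_base[OF abcd h] by (simp add: Form_def Dl_def)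
  qed
next
  case (Suc l)
  show ?case
  proof (intro allI impI)
    fix y and "is" :: "nat list"
    assume len: "length is = 4 + Suc l" and st: "set is \<subseteq> {..<dimF k}" and ex: "\<exists>p<4. is!p > k"
    obtain js a where isq: "is = js @ [a]" using len by (cases "is" rule: rev_exhaust) auto
    have lenj: "length js = 4 + l" using len isq by simp
    have stj: "set js \<subseteq> {..<dimF k}" and aN: "a < dimF k" using st isq by auto
    obtain q where q: "q < 4" "is!q > k" using ex by auto
    have jq: "js!q = is!q" using q lenj isq by (simp add: nth_append)
    have exj: "\<exists>p<4. js!p > k" using q jq by auto
    let ?T = "(cov (dimF k) (gF k F eps) ^^ l) (curv (dimF k) (gF k F eps))"
    have IH: "\<And>y xs. length xs = 4 + l \<Longrightarrow> set xs \<subseteq> {..<dimF k} \<Longrightarrow> (\<exists>p<4. xs!p > k) \<Longrightarrow> ?T y xs = Form l y xs"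
      using Suc.IH by blast
    have Tjs: "(\<lambda>z. ?T z js) = (\<lambda>z. Form l z js)" using IH[OF lenj stj exj] by auto
    have corr: "chr (dimF k) (gF k F eps) c a (js ! p) y * ?T y (js[p := c]) = 0"
      if p: "p < length js" and c: "c < dimF k" for p c
    proof -
      have jpN: "js!p < dimF k" using stj p nth_mem by (metis lessThan_iff subsetD)
      show ?thesis
      proof (cases "c \<le> k")
        case True
        then show ?thesis by (simp add: chr_eq[OF c aN jpN] ChrE_u)
      next
        case False
        have len': "length (js[p:=c]) = 4 + l" using lenj by simp
        have st': "set (js[p:=c]) \<subseteq> {..<dimF k}" using stj c by (auto dest: set_update_subset_insert[THEN subsetD])
        have ex': "\<exists>p'<4. (js[p:=c])!p' > k"
        proof (cases "p < 4")
          case True then show ?thesis using False p by (intro exI[of _ p]) simp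
        next
          case False then show ?thesis using q jq lenj by (intro exI[of _ q]) simp
        qed
        have T': "?T y (js[p:=c]) = Form l y (js[p:=c])" by (rule IH[OF len' st' ex'])
        have "ChrE y c a (js!p) * Form l y (js[p:=c]) = 0"
          unfolding Form_def sum_distrib_left
        proof (rule sum_zero)
          fix i assume "i \<in> {1..k}"
          then have i: "1 \<le> i" "i \<le> k" by auto
          let ?h = "js[p:=c]"
          show "ChrE y c a (js!p) * (Ef i ?h * (if \<forall>p'\<in>{4..<length ?h}. ?h!p' = i then Dl l i (y i) else 0)) = 0"
          proof (cases "p < 4")
            case False
            have nall: "\<not> (\<forall>p'\<in>{4..<length ?h}. ?h!p' = i)"
            proof
              assume "\<forall>p'\<in>{4..<length ?h}. ?h!p' = i"
              moreover have "p \<in> {4..<length ?h}" using False p by simp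
              ultimately have "?h!p = i" by blast
              then show False using p \<open>\<not> c \<le> k\<close> i by simp
            qed
            show ?thesis unfolding if_not_P[OF nall] by simp
          next
            case True
            show ?thesis
            proof (rule ccontr)
              assume nz: "ChrE y c a (js!p) * (Ef i ?h * (if \<forall>p'\<in>{4..<length ?h}. ?h!p' = i then Dl l i (y i) else 0)) \<noteq> 0"
              then have E: "Ef i ?h \<noteq> 0" and Ch: "ChrE y c a (js!p) \<noteq> 0" by auto
              have hp: "?h!p = c" using p by simp
              have cs: "c = Suc (2*k+i)" using Ef_nz_s[OF E i True] hp \<open>\<not> c \<le> k\<close> by simp
              show False
              proof (cases "q = p")
                case True
                then have "js!p > k" using q jq by simp
                then have "ChrE y c a (js!p) = 0" unfolding cs using i by (simp add: ChrE_s)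
                then show False using Ch by simp
              next
                case qp: False
                have "?h!q = js!q" using qp by simp
                then have "?h!q > k" using q jq by simp
                then show False using Ef_nz_two[OF E i True q(1) _ _] qp hp \<open>\<not> c \<le> k\<close> by auto
              qed
            qed
          qed
        qed
        then show ?thesis by (simp add: chr_eq[OF c aN jpN] T')
      qed
    qed
    have "(cov (dimF k) (gF k F eps) ^^ Suc l) (curv (dimF k) (gF k F eps)) y is = cov (dimF k) (gF k F eps) ?T y (js @ [a])"
      by (simp add: isq)
    also have "\<dots> = pd a (\<lambda>z. Form l z js) y"
    proof -
      have "(\<Sum>p<length js. \<Sum>c<dimF k. chr (dimF k) (gF k F eps) c a (js ! p) y * ?T y (js[p := c])) = 0"
        by (intro sum_zero) (simp add: corr)
      then show ?thesis unfolding cov_app Tjs by simp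
    qed
    also have "\<dots> = Form (Suc l) y is" using Form_pd[of js a l y] lenj isq by simp
    finally show "(cov (dimF k) (gF k F eps) ^^ Suc l) (curv (dimF k) (gF k F eps)) y is = Form (Suc l) y is" .
  qed
qed

end

lemma span_basis:
  fixes B :: "nat \<Rightarrow> nat \<Rightarrow> real" and N :: nat
  assumes lin: "\<forall>c. (\<forall>j<N. (\<Sum>i<N. c i * B i j) = 0) \<longrightarrow> (\<forall>i<N. c i = 0)"
    and m: "m < N"
  shows "\<exists>c. \<forall>n<N. (\<Sum>b<N. c b * B b n) = (if n = m then 1 else 0)"
proof -
  define M :: "real Matrix.mat" where "M = Matrix.mat N N (\<lambda>(j,i). B i j)"
  have MC: "M \<in> carrier_mat N N" unfolding M_def by simp
  have "Determinant.det M \<noteq> 0"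
  proof
    assume "Determinant.det M = 0"
    then obtain v where v: "v \<in> carrier_vec N" "v \<noteq> 0\<^sub>v N" "M *\<^sub>v v = 0\<^sub>v N"
      using det_0_iff_vec_prod_zero_field[OF MC] by auto
    have "\<forall>j<N. (\<Sum>i<N. (v $ i) * B i j) = 0"
    proof (intro allI impI)
      fix j assume j: "j < N"
      have "(M *\<^sub>v v) $ j = 0" using v(3) j by simp
      then show "(\<Sum>i<N. (v $ i) * B i j) = 0"
        using j v(1) unfolding M_def by (simp add: mult_mat_vec_def scalar_prod_def lessThan_atLeast0 mult.commute)
    qed
    then have "\<forall>i<N. v $ i = 0" using lin by blast
    then have "v = 0\<^sub>v N" using v(1) by (intro eq_vecI) auto
    then show False using v(2) by simp
  qed
  from det_non_zero_imp_unit[OF MC this, of undefined]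
  obtain M' where M': "M' \<in> carrier_mat N N" "M * M' = 1\<^sub>m N"
    unfolding Units_def ring_mat_def by auto
  show ?thesis
  proof (intro exI[of _ "\<lambda>b. M' $$ (b, m)"] allI impI)
    fix n assume n: "n < N"
    have "(M * M') $$ (n, m) = (if n = m then 1 else 0)" using M'(2) n m by simp
    then show "(\<Sum>b<N. M' $$ (b, m) * B b n) = (if n = m then 1 else 0)"
      using n m M'(1) unfolding M_def by (simp add: scalar_prod_def lessThan_atLeast0 mult.commute)
  qed
qed

lemma L_Suc: "{is. length is = Suc n \<and> set is \<subseteq> {..<(N::nat)}} = (\<lambda>(a, is). a # is) ` ({..<N} \<times> {is. length is = n \<and> set is \<subseteq> {..<N}})"
proof -
  { fix xs :: "nat list"
    have "xs \<in> {is. length is = Suc n \<and> set is \<subseteq> {..<N}} \<longleftrightarrow> xs \<in> (\<lambda>(a, is). a # is) ` ({..<N} \<times> {is. length is = n \<and> set is \<subseteq> {..<N}})"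
      by (cases xs) (auto simp: image_iff) }
  then show ?thesis by blast
qed

lemma finite_L: "finite {is. length is = n \<and> set is \<subseteq> {..<(N::nat)}}"
  using finite_lists_length_eq[of "{..<N}" n] by (simp add: conj_commute)

lemma teval_Nil: "teval N T y [] = T y []"
proof -
  have "{is. length is = length ([]::(nat \<Rightarrow> real) list) \<and> set is \<subseteq> {..<N}} = {[]}" by auto
  then show ?thesis unfolding teval_def by simp
qed

lemma teval_Cons: "teval N T y (X # Xs) = (\<Sum>a<N. X a * teval N (\<lambda>y is. T y (a # is)) y Xs)"
proof -
  let ?L = "{is. length is = length Xs \<and> set is \<subseteq> {..<N}}"
  have inj: "inj_on (\<lambda>(a, is). a # is) ({..<N} \<times> ?L)" by (auto simp: inj_on_def)
  have re: "(\<Sum>is\<in>(\<lambda>(a, is). a # is) ` ({..<N} \<times> ?L). g is) = (\<Sum>a<N. \<Sum>is\<in>?L. g (a # is))" for g :: "nat list \<Rightarrow> real"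
    by (subst sum.reindex[OF inj]) (simp add: sum.cartesian_product split_def)
  have "teval N T y (X # Xs) = (\<Sum>is\<in>(\<lambda>(a, is). a # is) ` ({..<N} \<times> ?L). T y is * (\<Prod>p<Suc (length Xs). ((X # Xs) ! p) (is ! p)))"
    unfolding teval_def length_Cons L_Suc ..
  also have "\<dots> = (\<Sum>a<N. \<Sum>is\<in>?L. T y (a # is) * (\<Prod>p<Suc (length Xs). ((X # Xs) ! p) ((a # is) ! p)))"
    by (rule re)
  also have "\<dots> = (\<Sum>a<N. \<Sum>is\<in>?L. T y (a # is) * (X a * (\<Prod>p<length Xs. (Xs ! p) (is ! p))))"
    by (simp only: prod.lessThan_Suc_shift nth_Cons_0 nth_Cons_Suc)
  also have "\<dots> = (\<Sum>a<N. X a * teval N (\<lambda>y is. T y (a # is)) y Xs)"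
    unfolding teval_def by (simp add: sum_distrib_left mult.assoc mult.left_commute)
  finally show ?thesis .
qed

lemma teval_cong:
  assumes "length Xs = length Ys" "\<And>p n. p < length Xs \<Longrightarrow> n < N \<Longrightarrow> (Xs!p) n = (Ys!p) n"
  shows "teval N T y Xs = teval N T y Ys"
  unfolding teval_def
proof (rule sum.cong)
  show "{is. length is = length Xs \<and> set is \<subseteq> {..<N}} = {is. length is = length Ys \<and> set is \<subseteq> {..<N}}"
    using assms(1) by simp
next
  fix "is" assume "is \<in> {is. length is = length Ys \<and> set is \<subseteq> {..<N}}"
  then have "\<And>p. p < length Xs \<Longrightarrow> is ! p < N" using assms(1) by (metis (mono_tags, lifting) lessThan_iff mem_Collect_eq nth_mem subsetD)
  then show "T y is * (\<Prod>p<length Xs. (Xs ! p) (is ! p)) = T y is * (\<Prod>p<length Ys. (Ys ! p) (is ! p))"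
    using assms by (auto intro!: prod.cong)
qed

lemma teval_congT:
  assumes "\<And>is. length is = length Xs \<Longrightarrow> set is \<subseteq> {..<N} \<Longrightarrow> (\<Prod>p<length Xs. (Xs!p) (is!p)) \<noteq> 0 \<Longrightarrow> T y is = T' y is"
  shows "teval N T y Xs = teval N T' y Xs"
  unfolding teval_def by (rule sum.cong[OF refl]) (use assms in force)

lemma teval_sumT: "finite S \<Longrightarrow> teval N (\<lambda>y is. \<Sum>i\<in>S. c i * T i y is) y Xs = (\<Sum>i\<in>S. c i * teval N (T i) y Xs)"
  unfolding teval_def by (simp add: sum_distrib_right sum_distrib_left mult.assoc sum.swap[of _ S])

lemma teval_lin:
  assumes p: "p < length Xs" and S: "finite S"
  shows "teval N T y (Xs[p := (\<lambda>n. \<Sum>b\<in>S. c b * Y b n)]) = (\<Sum>b\<in>S. c b * teval N T y (Xs[p := Y b]))"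
proof -
  have pr: "(\<Prod>q<length Xs. ((Xs[p := Z]) ! q) (is ! q)) = Z (is ! p) * (\<Prod>q\<in>{..<length Xs} - {p}. (Xs ! q) (is ! q))" for Z "is"
  proof -
    have "(\<Prod>q<length Xs. ((Xs[p := Z]) ! q) (is ! q)) = ((Xs[p := Z]) ! p) (is ! p) * (\<Prod>q\<in>{..<length Xs} - {p}. ((Xs[p := Z]) ! q) (is ! q))"
      using p by (subst prod.remove[of _ p]) auto
    also have "\<dots> = Z (is ! p) * (\<Prod>q\<in>{..<length Xs} - {p}. (Xs ! q) (is ! q))"
      using p by (auto intro!: prod.cong)
    finally show ?thesis .
  qed
  show ?thesis
    unfolding teval_def length_list_update pr
    by (simp add: sum_distrib_right sum_distrib_left mult.assoc mult.left_commute sum.swap[of _ S])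
qed

lemma teval_scale: "teval N (\<lambda>y is. c * T y is) y Xs = c * teval N T y Xs"
  unfolding teval_def by (simp add: sum_distrib_left mult.assoc)

lemma teval_zero: "teval N (\<lambda>y is. 0) y Xs = 0"
  unfolding teval_def by simp

lemma teval_H:
  assumes i: "i < N"
  shows "teval N (\<lambda>y is. if \<forall>x\<in>set is. x = i then 1 else 0) y Ys = (\<Prod>Y\<leftarrow>Ys. Y i)"
proof (induction Ys)
  case Nil then show ?case by (simp add: teval_Nil)
next
  case (Cons Y Ys)
  have "teval N (\<lambda>y is. if \<forall>x\<in>set is. x = i then 1 else 0) y (Y # Ys)
      = (\<Sum>a<N. Y a * teval N (\<lambda>y is. if \<forall>x\<in>set (a # is). x = i then 1 else 0) y Ys)"
    by (rule teval_Cons)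
  also have "\<dots> = (\<Sum>a<N. if a = i then Y i * teval N (\<lambda>y is. if \<forall>x\<in>set is. x = i then 1 else 0) y Ys else 0)"
    by (rule sum.cong[OF refl]) (simp add: teval_zero)
  also have "\<dots> = Y i * (\<Prod>Y\<leftarrow>Ys. Y i)" using i Cons by simp
  finally show ?case by simp
qed

context MF
begin

definition Av :: "nat \<Rightarrow> (nat \<Rightarrow> real) \<Rightarrow> (nat \<Rightarrow> real) \<Rightarrow> real" where
  "Av i X Y = X 0 * Y i - X i * Y 0"
definition Cv :: "nat \<Rightarrow> (nat \<Rightarrow> real) \<Rightarrow> (nat \<Rightarrow> real) \<Rightarrow> real" where
  "Cv i X Y = X i * Y (Suc (2*k+i)) - X (Suc (2*k+i)) * Y i"

lemma sum_2pt: "finite S \<Longrightarrow> x1 \<in> S \<Longrightarrow> x2 \<in> S \<Longrightarrow> x1 \<noteq> x2 \<Longrightarrow>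
   (\<Sum>a\<in>S. (if a = x1 then u else if a = x2 then v else (0::real))) = u + v"
proof -
  assume fin: "finite S" and x: "x1 \<in> S" "x2 \<in> S" "x1 \<noteq> x2"
  have "(\<Sum>a\<in>S. (if a = x1 then u else if a = x2 then v else (0::real))) = (\<Sum>a\<in>S. (if a = x1 then u else 0)) + (\<Sum>a\<in>S. (if a = x2 then v else 0))"
    unfolding sum.distrib[symmetric] by (rule sum.cong) (use x in auto)
  then show ?thesis using fin x by simp
qed

lemma sumAf:
  assumes i: "1 \<le> i" "i \<le> k"
  shows "(\<Sum>a<dimF k. X a * (\<Sum>b<dimF k. Y b * (Af i a b * Z))) = Av i X Y * Z"
proof -
  have N: "0 < dimF k" "i < dimF k" using i by (auto simp: dimF_eq)
  have inner: "(\<Sum>b<dimF k. Y b * (Af i a b * Z)) = (if a = 0 then Y i * Z else if a = i then - (Y 0 * Z) else 0)" for a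
  proof -
    have "(\<Sum>b<dimF k. Y b * (Af i a b * Z)) = (\<Sum>b<dimF k. if b = (if a = 0 then i else 0) then (if a = 0 then Y i * Z else if a = i then - (Y 0 * Z) else 0) else 0)"
      by (rule sum.cong[OF refl]) (use i in \<open>auto simp: Af_def\<close>)
    also have "\<dots> = (if a = 0 then Y i * Z else if a = i then - (Y 0 * Z) else 0)" using N by simp
    finally show ?thesis .
  qed
  have "(\<Sum>a<dimF k. X a * (\<Sum>b<dimF k. Y b * (Af i a b * Z))) = (\<Sum>a<dimF k. (if a = 0 then X 0 * (Y i * Z) else if a = i then X i * (- (Y 0 * Z)) else 0))"
    unfolding inner by (rule sum.cong[OF refl]) auto
  also have "\<dots> = X 0 * (Y i * Z) + X i * (- (Y 0 * Z))" using N i by (intro sum_2pt) auto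
  finally show ?thesis unfolding Av_def by (simp add: algebra_simps)
qed

lemma sumCf:
  assumes i: "1 \<le> i" "i \<le> k"
  shows "(\<Sum>a<dimF k. X a * (\<Sum>b<dimF k. Y b * (Cf i a b * Z))) = Cv i X Y * Z"
proof -
  let ?s = "Suc (2*k+i)"
  have N: "?s < dimF k" "i < dimF k" using i by (auto simp: dimF_eq)
  have inner: "(\<Sum>b<dimF k. Y b * (Cf i a b * Z)) = (if a = i then Y ?s * Z else if a = ?s then - (Y i * Z) else 0)" for a
  proof -
    have "(\<Sum>b<dimF k. Y b * (Cf i a b * Z)) = (\<Sum>b<dimF k. if b = (if a = i then ?s else i) then (if a = i then Y ?s * Z else if a = ?s then - (Y i * Z) else 0) else 0)"
      by (rule sum.cong[OF refl]) (use i in \<open>auto simp: Cf_def\<close>)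
    also have "\<dots> = (if a = i then Y ?s * Z else if a = ?s then - (Y i * Z) else 0)" using N by simp
    finally show ?thesis .
  qed
  have "(\<Sum>a<dimF k. X a * (\<Sum>b<dimF k. Y b * (Cf i a b * Z))) = (\<Sum>a<dimF k. (if a = i then X i * (Y ?s * Z) else if a = ?s then X ?s * (- (Y i * Z)) else 0))"
    unfolding inner by (rule sum.cong[OF refl]) auto
  also have "\<dots> = X i * (Y ?s * Z) + X ?s * (- (Y i * Z))" using N i by (intro sum_2pt) auto
  finally show ?thesis unfolding Cv_def by (simp add: algebra_simps)
qed

lemma sum2_add: "(\<Sum>c\<in>S. X c * (\<Sum>d\<in>T. Y d * (f c d + g c d))) = (\<Sum>c\<in>S. X c * (\<Sum>d\<in>T. Y d * f c d)) + (\<Sum>c\<in>S. X c * (\<Sum>d\<in>T. Y d * (g c d::real)))"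
  by (simp add: sum.distrib distrib_left)

lemma teval_EG:
  assumes i: "1 \<le> i" "i \<le> k"
  shows "teval (dimF k) (\<lambda>y is. Ef i is * (if \<forall>p\<in>{4..<length is}. is!p = i then 1 else 0)) y (X0 # X1 # X2 # X3 # Ys)
     = (Av i X0 X1 * Cv i X2 X3 + Cv i X0 X1 * Av i X2 X3) * (\<Prod>Y\<leftarrow>Ys. Y i)"
proof -
  have iN: "i < dimF k" using i by (simp add: dimF_eq)
  let ?H = "\<lambda>y is. if \<forall>x\<in>set is. x = i then 1 else (0::real)"
  have inner: "teval (dimF k) (\<lambda>y is. (\<lambda>y is. Ef i is * (if \<forall>p\<in>{4..<length is}. is!p = i then 1 else 0)) y (a # b # c # d # is)) y Ys
      = (Af i a b * Cf i c d + Cf i a b * Af i c d) * (\<Prod>Y\<leftarrow>Ys. Y i)" for a b c d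
  proof -
    have "\<And>is. (\<forall>p\<in>{4..<length (a # b # c # d # is)}. (a # b # c # d # is) ! p = i) = (\<forall>x\<in>set is. x = i)"
    proof -
      fix "is" :: "nat list"
      have "(\<forall>p\<in>{4..<length (a # b # c # d # is)}. (a # b # c # d # is) ! p = i) = (\<forall>q<length is. is ! q = i)"
      proof
        assume H: "\<forall>p\<in>{4..<length (a # b # c # d # is)}. (a # b # c # d # is) ! p = i"
        show "\<forall>q<length is. is ! q = i"
        proof (intro allI impI)
          fix q assume "q < length is"
          then have "Suc (Suc (Suc (Suc q))) \<in> {4..<length (a # b # c # d # is)}" by simp
          then show "is ! q = i" using H by fastforce
        qed
      next
        assume H: "\<forall>q<length is. is ! q = i"
        show "\<forall>p\<in>{4..<length (a # b # c # d # is)}. (a # b # c # d # is) ! p = i"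
        proof
          fix p assume p: "p \<in> {4..<length (a # b # c # d # is)}"
          have "p = Suc (Suc (Suc (Suc (p - 4))))" "p - 4 < length is" using p by auto
          then obtain q where "p = Suc (Suc (Suc (Suc q)))" "q < length is" by blast
          then show "(a # b # c # d # is) ! p = i" using H by simp
        qed
      qed
      also have "\<dots> = (\<forall>x\<in>set is. x = i)" by (metis in_set_conv_nth)
      finally show "?thesis is" .
    qed
    then have eq: "(\<lambda>y is. (\<lambda>y is. Ef i is * (if \<forall>p\<in>{4..<length is}. is!p = i then 1 else 0)) y (a # b # c # d # is))
        = (\<lambda>y is. (Af i a b * Cf i c d + Cf i a b * Af i c d) * ?H y is)"
      by (simp add: Ef_def)
    show ?thesis unfolding eq teval_scale teval_H[OF iN] ..
  qed
  let ?P = "\<Prod>Y\<leftarrow>Ys. Y i"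
  have s1: "(\<Sum>c<dimF k. X2 c * (\<Sum>d<dimF k. X3 d * ((Af i a b * Cf i c d + Cf i a b * Af i c d) * ?P)))
      = Af i a b * (Cv i X2 X3 * ?P) + Cf i a b * (Av i X2 X3 * ?P)" for a b
  proof -
    have "(\<Sum>c<dimF k. X2 c * (\<Sum>d<dimF k. X3 d * ((Af i a b * Cf i c d + Cf i a b * Af i c d) * ?P)))
      = (\<Sum>c<dimF k. X2 c * (\<Sum>d<dimF k. X3 d * (Cf i c d * (Af i a b * ?P) + Af i c d * (Cf i a b * ?P))))"
      by (simp add: algebra_simps)
    also have "\<dots> = Cv i X2 X3 * (Af i a b * ?P) + Av i X2 X3 * (Cf i a b * ?P)"
      unfolding sum2_add sumAf[OF i] sumCf[OF i] ..
    finally show ?thesis by (simp add: algebra_simps)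
  qed
  show ?thesis
    unfolding teval_Cons inner s1 sum2_add sumAf[OF i] sumCf[OF i] by (simp add: algebra_simps)
qed

end

context MF
begin

lemma Form_alt: "Form l y is = (\<Sum>i\<in>{1..k}. Dl l i (y i) * (Ef i is * (if \<forall>p\<in>{4..<length is}. is!p = i then 1 else 0)))"
  unfolding Form_def by (rule sum.cong) auto

lemma teval_Form:
  "teval (dimF k) (Form l) y (X0 # X1 # X2 # X3 # Ys) =
   (\<Sum>i\<in>{1..k}. Dl l i (y i) * ((Av i X0 X1 * Cv i X2 X3 + Cv i X0 X1 * Av i X2 X3) * (\<Prod>Y\<leftarrow>Ys. Y i)))"
proof -
  have "teval (dimF k) (Form l) y (X0 # X1 # X2 # X3 # Ys) =
     teval (dimF k) (\<lambda>y' is. \<Sum>i\<in>{1..k}. Dl l i (y i) * (\<lambda>i y is. Ef i is * (if \<forall>p\<in>{4..<length is}. is!p = i then 1 else 0)) i y' is) y (X0 # X1 # X2 # X3 # Ys)"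
    by (rule teval_congT) (simp add: Form_alt)
  also have "\<dots> = (\<Sum>i\<in>{1..k}. Dl l i (y i) * teval (dimF k) (\<lambda>y is. Ef i is * (if \<forall>p\<in>{4..<length is}. is!p = i then 1 else 0)) y (X0 # X1 # X2 # X3 # Ys))"
    by (rule teval_sumT) simp
  also have "\<dots> = (\<Sum>i\<in>{1..k}. Dl l i (y i) * ((Av i X0 X1 * Cv i X2 X3 + Cv i X0 X1 * Av i X2 X3) * (\<Prod>Y\<leftarrow>Ys. Y i)))"
    by (rule sum.cong[OF refl]) (simp add: teval_EG)
  finally show ?thesis .
qed

lemma teval_cov:
  assumes len: "length Xs = 4 + l" and pz: "q < 4" "\<And>m. m \<le> k \<Longrightarrow> (Xs!q) m = 0"
  shows "teval (dimF k) ((cov (dimF k) (gF k F eps) ^^ l) (curv (dimF k) (gF k F eps))) y Xs = teval (dimF k) (Form l) y Xs"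
proof (rule teval_congT)
  fix "is" assume l: "length is = length Xs" and st: "set is \<subseteq> {..<dimF k}" and nz: "(\<Prod>p<length Xs. (Xs ! p) (is ! p)) \<noteq> 0"
  have "(Xs ! q) (is ! q) \<noteq> 0" using nz pz(1) len by (auto simp: prod_zero_iff)
  then have "is ! q > k" using pz(2) not_le by blast
  then have ex: "\<exists>p<4. is!p > k" using pz(1) by blast
  show "(cov (dimF k) (gF k F eps) ^^ l) (curv (dimF k) (gF k F eps)) y is = Form l y is"
    using INV[of l] l len st ex by auto
qed

end

context MF
begin

lemma Rmodel_uuu:
  assumes "a \<le> k" "b \<le> k" "c \<le> k"
  shows "Rmodel k a b c d = (\<Sum>i\<in>{1..k}. (if a = 0 \<and> b = i \<and> c = i \<and> d = Suc (2*k+i) then 1 else 0)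
                               - (if a = i \<and> b = 0 \<and> c = i \<and> d = Suc (2*k+i) then 1 else 0))"
  unfolding Rmodel_def Let_def by (rule sum.cong[OF refl]) (use assms in auto)

lemma Rmodel_R1: "b < dimF k \<Longrightarrow> Rmodel k b 1 1 (Suc (2*k+1)) = (if b = 0 then 1 else 0)"
proof -
  have "Rmodel k b 1 1 (Suc (2*k+1)) = (\<Sum>i\<in>{1..k}. if i = 1 then (if b = 0 then 1 else 0) else 0)"
    unfolding Rmodel_def Let_def by (rule sum.cong[OF refl]) auto
  then show ?thesis using k1 by simp
qed

lemma Rmodel_R2: "1 \<le> j \<Longrightarrow> j \<le> k \<Longrightarrow> Rmodel k b 0 j (Suc (2*k+j)) = (if b = j then -1 else 0)"
proof -
  assume j: "1 \<le> j" "j \<le> k"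
  have "Rmodel k b 0 j (Suc (2*k+j)) = (\<Sum>i\<in>{1..k}. if i = j then (if b = j then -1 else 0) else 0)"
    unfolding Rmodel_def Let_def by (rule sum.cong[OF refl]) auto
  then show ?thesis using j by simp
qed

lemma Rmodel_R3: "1 \<le> j \<Longrightarrow> j \<le> k \<Longrightarrow> Rmodel k b j 0 j = (if b = Suc (2*k+j) then -1 else 0)"
proof -
  assume j: "1 \<le> j" "j \<le> k"
  have "Rmodel k b j 0 j = (\<Sum>i\<in>{1..k}. if i = j then (if b = Suc (2*k+j) then -1 else 0) else 0)"
    unfolding Rmodel_def Let_def by (rule sum.cong[OF refl]) auto
  then show ?thesis using j by simp
qed

lemma gmodel_u: "a \<le> k \<Longrightarrow> gmodel k eps a b = (if b = Suc (k+a) then 1 else 0)"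
  unfolding gmodel_def by auto

lemma gmodel_s: "1 \<le> d \<Longrightarrow> d \<le> k \<Longrightarrow> gmodel k eps (Suc (2*k+d)) b = (if b = Suc (2*k+d) then eps d else 0)"
  unfolding gmodel_def by auto

lemma gval_lin2: "finite S \<Longrightarrow> gval N g y X (\<lambda>n. \<Sum>b\<in>S. c b * Y b n) = (\<Sum>b\<in>S. c b * gval N g y X (Y b))"
  unfolding gval_def by (simp add: sum_distrib_left sum_distrib_right mult.assoc mult.left_commute sum.swap[of _ S])

lemma gval_cong2: "(\<And>n. n < N \<Longrightarrow> Y n = Y' n) \<Longrightarrow> gval N g y X Y = gval N g y X Y'"
  unfolding gval_def by (intro sum.cong refl) auto

lemma gval_Ev:
  assumes m: "m \<le> k"
  shows "gval (dimF k) (gF k F eps) y X (\<lambda>n. if n = Suc (k+m) then 1 else 0) = X m"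
proof -
  have vN: "Suc (k+m) < dimF k" using m by (simp add: dimF_eq)
  have "gval (dimF k) (gF k F eps) y X (\<lambda>n. if n = Suc (k+m) then 1 else 0) = (\<Sum>a<dimF k. gF k F eps y a (Suc (k+m)) * X a)"
    unfolding gval_def by (rule sum.cong[OF refl]) (simp add: ifz vN cong: if_cong)
  also have "\<dots> = X m" unfolding dimF_eq sum_split4 using m by (simp add: gF_vals ifz)
  finally show ?thesis .
qed

end

locale NBL = MF +
  fixes P :: "nat \<Rightarrow> real" and B :: "nat \<Rightarrow> nat \<Rightarrow> real"
  assumes nb: "normalized_basis k F eps P B"
    and anz: "\<forall>j\<in>{1..k}. \<forall>u. deriv (F j) u + 1 \<noteq> 0"
begin

lemma lin: "\<forall>c. (\<forall>j<dimF k. (\<Sum>i<dimF k. c i * B i j) = 0) \<longrightarrow> (\<forall>i<dimF k. c i = 0)"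
  using nb unfolding normalized_basis_def by blast

lemma gm: "a < dimF k \<Longrightarrow> b < dimF k \<Longrightarrow> gval (dimF k) (gF k F eps) P (B a) (B b) = gmodel k eps a b"
  using nb unfolding normalized_basis_def by blast

lemma rm: "a < dimF k \<Longrightarrow> b < dimF k \<Longrightarrow> c < dimF k \<Longrightarrow> d < dimF k \<Longrightarrow>
   teval (dimF k) (curv (dimF k) (gF k F eps)) P [B a, B b, B c, B d] = Rmodel k a b c d"
  using nb unfolding normalized_basis_def by blast

definition E :: "nat \<Rightarrow> nat \<Rightarrow> real" where "E m = (\<lambda>n. if n = m then 1 else 0)"

lemma alpha_nz: "1 \<le> i \<Longrightarrow> i \<le> k \<Longrightarrow> Dl 0 i u \<noteq> 0"
  using anz unfolding Dl_def by (auto simp: add.commute)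

lemma teval_lin0:
  assumes S: "finite S"
  shows "teval N T y [(\<lambda>n. \<Sum>b\<in>S. c b * Y b n), X1, X2, X3] = (\<Sum>b\<in>S. c b * teval N T y [Y b, X1, X2, X3])"
  using teval_lin[of 0 "[X1, X1, X2, X3]" S N T y c Y] S by simp

lemma teval_lin3:
  assumes S: "finite S"
  shows "teval N T y [X0, X1, X2, (\<lambda>n. \<Sum>b\<in>S. c b * Y b n)] = (\<Sum>b\<in>S. c b * teval N T y [X0, X1, X2, Y b])"
  using teval_lin[of 3 "[X0, X1, X2, X2]" S N T y c Y] S by (simp add: numeral_3_eq_3)

lemma kernel:
  assumes m: "m \<le> k" and c: "\<forall>n<dimF k. (\<Sum>b<dimF k. c b * B b n) = E (Suc (k+m)) n"
    and xyz: "x < dimF k" "y < dimF k" "z < dimF k"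
  shows "(\<Sum>b<dimF k. c b * Rmodel k b x y z) = 0"
proof -
  let ?v = "Suc (k+m)"
  let ?R = "curv (dimF k) (gF k F eps)"
  have "teval (dimF k) ?R P [E ?v, B x, B y, B z] = teval (dimF k) (Form 0) P [E ?v, B x, B y, B z]"
    using teval_cov[of "[E ?v, B x, B y, B z]" 0 0 P] by (simp add: E_def)
  also have "\<dots> = 0" unfolding teval_Form
    by (rule sum_zero) (use m in \<open>auto simp: Av_def Cv_def E_def\<close>)
  finally have z: "teval (dimF k) ?R P [E ?v, B x, B y, B z] = 0" .
  have "teval (dimF k) ?R P [E ?v, B x, B y, B z] = teval (dimF k) ?R P [(\<lambda>n. \<Sum>b<dimF k. c b * B b n), B x, B y, B z]"
    by (rule teval_cong) (use c in \<open>auto simp: nth_Cons'\<close>)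
  also have "\<dots> = (\<Sum>b<dimF k. c b * teval (dimF k) ?R P [B b, B x, B y, B z])"
    by (rule teval_lin0) simp
  also have "\<dots> = (\<Sum>b<dimF k. c b * Rmodel k b x y z)"
    by (rule sum.cong[OF refl]) (simp add: rm xyz)
  finally show ?thesis using z by simp
qed

lemma Ev_facts:
  assumes m: "m \<le> k"
  shows "(\<forall>n<dimF k. E (Suc (k+m)) n = (\<Sum>a\<in>{..k}. B a m * B (Suc (k+a)) n)) \<and>
         (\<forall>d. 1 \<le> d \<longrightarrow> d \<le> k \<longrightarrow> B (Suc (2*k+d)) m = 0)"
proof -
  let ?v = "Suc (k+m)"
  have vN: "?v < dimF k" using m by (simp add: dimF_eq)
  obtain c where c0: "\<forall>n<dimF k. (\<Sum>b<dimF k. c b * B b n) = (if n = ?v then 1 else 0)"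
    using span_basis[OF lin vN] by blast
  have c: "\<forall>n<dimF k. (\<Sum>b<dimF k. c b * B b n) = E ?v n" using c0 by (simp add: E_def)
  have N0: "0 < dimF k" "1 < dimF k" "Suc (2*k+1) < dimF k" using k1 by (auto simp: dimF_eq)
  have cu0: "c 0 = 0"
  proof -
    have "(\<Sum>b<dimF k. c b * Rmodel k b 1 1 (Suc (2*k+1))) = 0" by (rule kernel[OF m c N0(2) N0(2) N0(3)])
    moreover have "(\<Sum>b<dimF k. c b * Rmodel k b 1 1 (Suc (2*k+1))) = (\<Sum>b<dimF k. c b * (if b = 0 then 1 else 0))"
      by (rule sum.cong[OF refl]) (simp only: Rmodel_R1 lessThan_iff)
    moreover have "(\<Sum>b<dimF k. c b * (if b = 0 then 1 else 0)) = c 0" using N0 by (simp add: ifz)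
    ultimately show ?thesis by simp
  qed
  have cuj: "c j = 0" if j: "1 \<le> j" "j \<le> k" for j
  proof -
    have jN: "j < dimF k" "Suc (2*k+j) < dimF k" using j by (auto simp: dimF_eq)
    have "(\<Sum>b<dimF k. c b * Rmodel k b 0 j (Suc (2*k+j))) = 0" by (rule kernel[OF m c N0(1) jN])
    moreover have "(\<Sum>b<dimF k. c b * Rmodel k b 0 j (Suc (2*k+j))) = (\<Sum>b<dimF k. c b * (if b = j then -1 else 0))"
      by (rule sum.cong[OF refl]) (simp only: Rmodel_R2[OF j])
    moreover have "(\<Sum>b<dimF k. c b * (if b = j then -1 else 0)) = - c j" using jN by (simp add: ifz)
    ultimately show ?thesis by simp
  qed
  have csd: "c (Suc (2*k+d)) = 0" if d: "1 \<le> d" "d \<le> k" for d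
  proof -
    have dN: "d < dimF k" "Suc (2*k+d) < dimF k" using d by (auto simp: dimF_eq)
    have "(\<Sum>b<dimF k. c b * Rmodel k b d 0 d) = 0" by (rule kernel[OF m c dN(1) N0(1) dN(1)])
    moreover have "(\<Sum>b<dimF k. c b * Rmodel k b d 0 d) = (\<Sum>b<dimF k. c b * (if b = Suc (2*k+d) then -1 else 0))"
      by (rule sum.cong[OF refl]) (simp only: Rmodel_R3[OF d])
    moreover have "(\<Sum>b<dimF k. c b * (if b = Suc (2*k+d) then -1 else 0)) = - c (Suc (2*k+d))" using dN by (simp add: ifz)
    ultimately show ?thesis by simp
  qed
  have gv: "B a' m = (\<Sum>b<dimF k. c b * gmodel k eps a' b)" if a': "a' < dimF k" for a'
  proof -
    have "B a' m = gval (dimF k) (gF k F eps) P (B a') (\<lambda>n. if n = ?v then 1 else 0)"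
      by (rule gval_Ev[OF m, symmetric])
    also have "\<dots> = gval (dimF k) (gF k F eps) P (B a') (\<lambda>n. \<Sum>b<dimF k. c b * B b n)"
      by (rule gval_cong2) (use c0 in auto)
    also have "\<dots> = (\<Sum>b<dimF k. c b * gval (dimF k) (gF k F eps) P (B a') (B b))"
      by (rule gval_lin2) simp
    also have "\<dots> = (\<Sum>b<dimF k. c b * gmodel k eps a' b)"
      by (rule sum.cong[OF refl]) (simp add: gm a')
    finally show ?thesis .
  qed
  have cv: "c (Suc (k+a)) = B a m" if a: "a \<le> k" for a
  proof -
    have aN: "a < dimF k" "Suc (k+a) < dimF k" using a by (auto simp: dimF_eq)
    have "(\<Sum>b<dimF k. c b * gmodel k eps a b) = (\<Sum>b<dimF k. c b * (if b = Suc (k+a) then 1 else 0))"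
      by (rule sum.cong[OF refl]) (simp only: gmodel_u[OF a])
    then show ?thesis using gv[OF aN(1)] aN by (simp add: ifz)
  qed
  have part1: "\<forall>n<dimF k. E ?v n = (\<Sum>a\<in>{..k}. B a m * B (Suc (k+a)) n)"
  proof (intro allI impI)
    fix n assume n: "n < dimF k"
    have "E ?v n = (\<Sum>b<dimF k. c b * B b n)" using c n by simp
    also have "\<dots> = (\<Sum>a\<in>{..k}. B a m * B (Suc (k+a)) n)"
      unfolding dimF_eq sum_split4 using cu0 cuj csd cv by simp
    finally show "E ?v n = (\<Sum>a\<in>{..k}. B a m * B (Suc (k+a)) n)" .
  qed
  have part2: "\<forall>d. 1 \<le> d \<longrightarrow> d \<le> k \<longrightarrow> B (Suc (2*k+d)) m = 0"
  proof (intro allI impI)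
    fix d assume d: "1 \<le> d" "d \<le> k"
    have dN: "Suc (2*k+d) < dimF k" using d by (auto simp: dimF_eq)
    have "(\<Sum>b<dimF k. c b * gmodel k eps (Suc (2*k+d)) b) = (\<Sum>b<dimF k. c b * (if b = Suc (2*k+d) then eps d else 0))"
      by (rule sum.cong[OF refl]) (simp only: gmodel_s[OF d])
    then have "B (Suc (2*k+d)) m = c (Suc (2*k+d)) * eps d"
      using gv[OF dN] dN by (simp add: ifz)
    then show "B (Suc (2*k+d)) m = 0" using csd[OF d] by simp
  qed
  show ?thesis using part1 part2 by blast
qed

end

context NBL
begin

lemma S_u0: "1 \<le> d \<Longrightarrow> d \<le> k \<Longrightarrow> m \<le> k \<Longrightarrow> B (Suc (2*k+d)) m = 0"
  using Ev_facts by blast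

lemma Ev: "m \<le> k \<Longrightarrow> n < dimF k \<Longrightarrow> E (Suc (k+m)) n = (\<Sum>a\<in>{..k}. B a m * B (Suc (k+a)) n)"
  using Ev_facts by blast

lemma Es_zero:
  assumes m: "1 \<le> m" "m \<le> k" and abc: "a \<le> k" "b \<le> k" "c \<le> k"
    and Rz: "\<And>d. d < dimF k \<Longrightarrow> Rmodel k a b c d = 0"
  shows "Dl 0 m (P m) * Av m (B a) (B b) * B c m = 0"
proof -
  let ?s = "Suc (2*k+m)"
  let ?R = "curv (dimF k) (gF k F eps)"
  have sN: "?s < dimF k" and abcN: "a < dimF k" "b < dimF k" "c < dimF k" using m abc by (auto simp: dimF_eq)
  obtain c' where c': "\<forall>n<dimF k. (\<Sum>b<dimF k. c' b * B b n) = (if n = ?s then 1 else 0)"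
    using span_basis[OF lin sN] by blast
  have "teval (dimF k) ?R P [B a, B b, B c, E ?s] = teval (dimF k) (Form 0) P [B a, B b, B c, E ?s]"
    using teval_cov[of "[B a, B b, B c, E ?s]" 0 3 P] by (simp add: E_def numeral_3_eq_3)
  also have "\<dots> = (\<Sum>i\<in>{1..k}. if i = m then Dl 0 m (P m) * Av m (B a) (B b) * B c m else 0)"
    unfolding teval_Form by (rule sum.cong[OF refl]) (auto simp: Av_def Cv_def E_def)
  also have "\<dots> = Dl 0 m (P m) * Av m (B a) (B b) * B c m" using m by simp
  finally have 1: "teval (dimF k) ?R P [B a, B b, B c, E ?s] = Dl 0 m (P m) * Av m (B a) (B b) * B c m" .
  have "teval (dimF k) ?R P [B a, B b, B c, E ?s] = teval (dimF k) ?R P [B a, B b, B c, (\<lambda>n. \<Sum>b<dimF k. c' b * B b n)]"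
    by (rule teval_cong) (use c' in \<open>auto simp: E_def nth_Cons'\<close>)
  also have "\<dots> = (\<Sum>d<dimF k. c' d * teval (dimF k) ?R P [B a, B b, B c, B d])"
    by (rule teval_lin3) simp
  also have "\<dots> = 0"
    by (rule sum_zero) (simp add: rm abcN Rz)
  finally show ?thesis using 1 by simp
qed

lemma Nj:
  assumes j: "1 \<le> j" "j \<le> k"
  shows "teval (dimF k) ((cov (dimF k) (gF k F eps) ^^ l) (curv (dimF k) (gF k F eps))) P
           ([B 0, B j, B j, B (Suc (2*k+j))] @ replicate l (B j))
       = (\<Sum>i\<in>{1..k}. Dl l i (P i) * (Av i (B 0) (B j) * B j i * B (Suc (2*k+j)) (Suc (2*k+i)) * (B j i) ^ l))"
proof -
  have "teval (dimF k) ((cov (dimF k) (gF k F eps) ^^ l) (curv (dimF k) (gF k F eps))) P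
           ([B 0, B j, B j, B (Suc (2*k+j))] @ replicate l (B j))
      = teval (dimF k) (Form l) P (B 0 # B j # B j # B (Suc (2*k+j)) # replicate l (B j))"
    using teval_cov[of "[B 0, B j, B j, B (Suc (2*k+j))] @ replicate l (B j)" l 3 P] S_u0[OF j]
    by (simp add: numeral_3_eq_3)
  also have "\<dots> = (\<Sum>i\<in>{1..k}. Dl l i (P i) * (Av i (B 0) (B j) * B j i * B (Suc (2*k+j)) (Suc (2*k+i)) * (B j i) ^ l))"
    unfolding teval_Form
  proof (rule sum.cong[OF refl])
    fix i assume "i \<in> {1..k}"
    then have i: "1 \<le> i" "i \<le> k" by auto
    have "Av i (B j) (B (Suc (2*k+j))) = 0" "Cv i (B j) (B (Suc (2*k+j))) = B j i * B (Suc (2*k+j)) (Suc (2*k+i))"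
      unfolding Av_def Cv_def using S_u0[OF j] i by auto
    moreover have "(\<Prod>Y\<leftarrow>replicate l (B j). Y i) = (B j i) ^ l" by (induction l) auto
    ultimately show "Dl l i (P i) * ((Av i (B 0) (B j) * Cv i (B j) (B (Suc (2*k+j))) + Cv i (B 0) (B j) * Av i (B j) (B (Suc (2*k+j)))) * (\<Prod>Y\<leftarrow>replicate l (B j). Y i))
        = Dl l i (P i) * (Av i (B 0) (B j) * B j i * B (Suc (2*k+j)) (Suc (2*k+i)) * (B j i) ^ l)"
      by (simp add: algebra_simps)
  qed
  finally show ?thesis .
qed

lemma Norm:
  assumes j: "1 \<le> j" "j \<le> k"
  shows "(\<Sum>i\<in>{1..k}. Dl 0 i (P i) * (Av i (B 0) (B j) * B j i * B (Suc (2*k+j)) (Suc (2*k+i)))) = 1"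
proof -
  have N: "0 < dimF k" "j < dimF k" "Suc (2*k+j) < dimF k" using j by (auto simp: dimF_eq)
  have "Rmodel k 0 j j (Suc (2*k+j)) = 1"
    using j by (simp add: Rmodel_uuu cong: sum.cong)
  then have "teval (dimF k) (curv (dimF k) (gF k F eps)) P [B 0, B j, B j, B (Suc (2*k+j))] = 1"
    using rm[OF N(1) N(2) N(2) N(3)] by simp
  then show ?thesis using Nj[OF j, of 0] by simp
qed

end

context NBL
begin

lemma Rz_c0: "a \<le> k \<Longrightarrow> b \<le> k \<Longrightarrow> Rmodel k a b 0 d = 0"
  by (simp add: Rmodel_uuu)

lemma Rz_bc: "b \<le> k \<Longrightarrow> c \<le> k \<Longrightarrow> b \<noteq> c \<Longrightarrow> Rmodel k 0 b c d = 0"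
  by (auto simp: Rmodel_uuu intro!: sum_zero)

lemma Ev_comb:
  assumes m: "m \<le> k" "m' \<le> k" and n: "n < dimF k"
    and coef: "\<And>a. a \<le> k \<Longrightarrow> x * B a m - y * B a m' = 0"
  shows "x * E (Suc (k+m)) n - y * E (Suc (k+m')) n = 0"
proof -
  have "x * E (Suc (k+m)) n - y * E (Suc (k+m')) n = (\<Sum>a\<in>{..k}. (x * B a m - y * B a m') * B (Suc (k+a)) n)"
    unfolding Ev[OF m(1) n] Ev[OF m(2) n] by (simp add: sum_distrib_left sum_subtractf algebra_simps)
  also have "\<dots> = 0" using coef by (simp add: sum_zero)
  finally show ?thesis .
qed

lemma M1: assumes m: "1 \<le> m" "m \<le> k" shows "B 0 m = 0"
proof (rule ccontr)
  assume nz: "B 0 m \<noteq> 0"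
  have a0: "Dl 0 m (P m) \<noteq> 0" using alpha_nz[OF m] .
  have "Av m (B a) (B 0) = 0" if a: "a \<le> k" for a
    using Es_zero[OF m a _ _, of 0 0] Rz_c0[OF a, of 0] a0 nz by auto
  then have coef: "\<And>a. a \<le> k \<Longrightarrow> B 0 0 * B a m - B 0 m * B a 0 = 0"
    unfolding Av_def by (simp add: algebra_simps)
  have N: "Suc k < dimF k" by (simp add: dimF_eq)
  have "B 0 0 * E (Suc (k+m)) (Suc k) - B 0 m * E (Suc (k+0)) (Suc k) = 0"
    by (rule Ev_comb[OF m(2) _ N]) (use coef in auto)
  then show False using nz m by (simp add: E_def)
qed

lemma Av0: "1 \<le> i \<Longrightarrow> i \<le> k \<Longrightarrow> Av i (B 0) (B j) = B 0 0 * B j i"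
  unfolding Av_def using M1 by simp

lemma M0: "B 0 0 \<noteq> 0"
proof
  assume z: "B 0 0 = 0"
  have "(\<Sum>i\<in>{1..k}. Dl 0 i (P i) * (Av i (B 0) (B 1) * B 1 i * B (Suc (2*k+1)) (Suc (2*k+i)))) = 0"
    by (rule sum_zero) (simp add: Av0 z)
  then show False using Norm[of 1] k1 by simp
qed

lemma M2:
  assumes j: "1 \<le> j" "j \<le> k" and j': "1 \<le> j'" "j' \<le> k" and jj: "j \<noteq> j'" and m: "1 \<le> m" "m \<le> k"
  shows "B j m * B j' m = 0"
proof -
  have "Dl 0 m (P m) * Av m (B 0) (B j') * B j m = 0"
    by (rule Es_zero[OF m _ j'(2) j(2)]) (use Rz_bc[OF j'(2) j(2)] jj in auto)
  then have "Dl 0 m (P m) * B 0 0 * (B j m * B j' m) = 0" using Av0[OF m] by (simp add: algebra_simps)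
  then show ?thesis using alpha_nz[OF m] M0 by simp
qed

lemma M3: assumes j: "1 \<le> j" "j \<le> k" shows "\<exists>i\<in>{1..k}. B j i \<noteq> 0"
proof (rule ccontr)
  assume "\<not> ?thesis"
  then have "\<And>i. i \<in> {1..k} \<Longrightarrow> B j i = 0" by auto
  then have "(\<Sum>i\<in>{1..k}. Dl 0 i (P i) * (Av i (B 0) (B j) * B j i * B (Suc (2*k+j)) (Suc (2*k+i)))) = 0"
    by (simp add: sum_zero)
  then show False using Norm[OF j] by simp
qed

lemma M4:
  assumes j: "1 \<le> j" "j \<le> k" and m: "1 \<le> m" "m \<le> k" and m': "1 \<le> m'" "m' \<le> k" and mm: "m \<noteq> m'"
    and nz: "B j m \<noteq> 0"
  shows "B j m' = 0"
proof (rule ccontr)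
  assume nz': "B j m' \<noteq> 0"
  have coef: "B j m' * B a m - B j m * B a m' = 0" if a: "a \<le> k" for a
  proof (cases "a = 0")
    case True then show ?thesis using M1[OF m] M1[OF m'] by simp
  next
    case False
    show ?thesis
    proof (cases "a = j")
      case True then show ?thesis by simp
    next
      case aj: False
      have "B a m = 0" using M2[OF _ a j aj m] False nz by auto
      moreover have "B a m' = 0" using M2[OF _ a j aj m'] False nz' by auto
      ultimately show ?thesis by simp
    qed
  qed
  have N: "Suc (k+m) < dimF k" using m by (simp add: dimF_eq)
  have "B j m' * E (Suc (k+m)) (Suc (k+m)) - B j m * E (Suc (k+m')) (Suc (k+m)) = 0"
    by (rule Ev_comb[OF m(2) m'(2) N]) (use coef in auto)
  then show False using nz' mm by (simp add: E_def)
qed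

lemma M5: assumes m: "1 \<le> m" "m \<le> k" shows "\<exists>j\<in>{1..k}. B j m \<noteq> 0"
proof (rule ccontr)
  assume "\<not> ?thesis"
  then have z: "\<And>j. j \<in> {1..k} \<Longrightarrow> B j m = 0" by auto
  have N: "Suc (k+m) < dimF k" using m by (simp add: dimF_eq)
  have "E (Suc (k+m)) (Suc (k+m)) = (\<Sum>a\<in>{..k}. B a m * B (Suc (k+a)) (Suc (k+m)))" by (rule Ev[OF m(2) N])
  also have "\<dots> = 0"
  proof (rule sum_zero)
    fix a assume "a \<in> {..k}"
    then have "B a m = 0" using z M1[OF m] by (cases "a = 0") auto
    then show "B a m * B (Suc (k+a)) (Suc (k+m)) = 0" by simp
  qed
  finally show False by (simp add: E_def)
qed

end

lemma ratio_alg: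
  fixes D0 D1 Dl w q :: real
  assumes w: "D0 * w = 1" and q: "q \<noteq> 0" and l: "l \<ge> 1"
  shows "(Dl * (w * q ^ l)) / (D1 * (w * q ^ 1)) ^ l = Dl * D0 ^ (l - 1) / D1 ^ l"
proof (cases "D1 = 0")
  case True then show ?thesis using l by simp
next
  case False
  obtain l' where l': "l = Suc l'" using l by (cases l) auto
  have D0: "D0 \<noteq> 0" and wz: "w \<noteq> 0" using w by auto
  have "(D1 * (w * q ^ 1)) ^ l = D1 ^ l * w ^ l * q ^ l" by (simp add: power_mult_distrib)
  moreover have "w ^ l = w * w ^ l'" using l' by simp
  moreover have "w ^ l' * D0 ^ l' = 1" using w by (metis power_mult_distrib power_one mult.commute)
  ultimately show ?thesis using l' False q D0 wz
    by (simp add: field_simps)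
qed

lemma sum_unique: "finite S \<Longrightarrow> x \<in> S \<Longrightarrow> (\<And>y. y \<in> S \<Longrightarrow> Q y \<longleftrightarrow> y = x) \<Longrightarrow>
   (\<Sum>y\<in>S. if Q y then c else (0::real)) = c"
  by (subst sum_single[of S x]) auto

context MF
begin
definition Phi :: "nat \<Rightarrow> (nat \<Rightarrow> real) \<Rightarrow> nat \<Rightarrow> real" where
  "Phi l P i = Dl l i (P i) * Dl 0 i (P i) ^ (l - 1) / Dl 1 i (P i) ^ l"
end

context NBL
begin

lemma ratio_j:
  assumes j: "1 \<le> j" "j \<le> k" and l: "l \<ge> 1"
  shows "teval (dimF k) ((cov (dimF k) (gF k F eps) ^^ l) (curv (dimF k) (gF k F eps))) P
           ([B 0, B j, B j, B (Suc (2*k+j))] @ replicate l (B j))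
       / (teval (dimF k) ((cov (dimF k) (gF k F eps) ^^ 1) (curv (dimF k) (gF k F eps))) P
           ([B 0, B j, B j, B (Suc (2*k+j))] @ replicate 1 (B j))) ^ l
       = (\<Sum>i\<in>{1..k}. if B j i \<noteq> 0 then Phi l P i else 0)"
proof -
  obtain i0 where i0: "i0 \<in> {1..k}" "B j i0 \<noteq> 0" using M3[OF j] by blast
  have oth: "B j i = 0" if "i \<in> {1..k}" "i \<noteq> i0" for i
    using M4[OF j, of i0 i] i0 that by auto
  let ?q = "B j i0" and ?s = "B (Suc (2*k+j)) (Suc (2*k+i0))"
  let ?w = "B 0 0 * ?q * ?q * ?s"
  have gen: "(\<Sum>i\<in>{1..k}. Dl L i (P i) * (Av i (B 0) (B j) * B j i * B (Suc (2*k+j)) (Suc (2*k+i)) * (B j i) ^ L'))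
       = Dl L i0 (P i0) * (?w * ?q ^ L')" for L L'
  proof -
    have "(\<Sum>i\<in>{1..k}. Dl L i (P i) * (Av i (B 0) (B j) * B j i * B (Suc (2*k+j)) (Suc (2*k+i)) * (B j i) ^ L'))
        = Dl L i0 (P i0) * (Av i0 (B 0) (B j) * B j i0 * B (Suc (2*k+j)) (Suc (2*k+i0)) * (B j i0) ^ L')"
      by (rule sum_single[OF _ i0(1)]) (auto simp: oth)
    then show ?thesis using i0(1) by (simp add: Av0 algebra_simps)
  qed
  have norm: "Dl 0 i0 (P i0) * ?w = 1" using Norm[OF j] gen[of 0 0] by simp
  have "teval (dimF k) ((cov (dimF k) (gF k F eps) ^^ l) (curv (dimF k) (gF k F eps))) P
           ([B 0, B j, B j, B (Suc (2*k+j))] @ replicate l (B j))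
       / (teval (dimF k) ((cov (dimF k) (gF k F eps) ^^ 1) (curv (dimF k) (gF k F eps))) P
           ([B 0, B j, B j, B (Suc (2*k+j))] @ replicate 1 (B j))) ^ l
       = (Dl l i0 (P i0) * (?w * ?q ^ l)) / (Dl 1 i0 (P i0) * (?w * ?q ^ 1)) ^ l"
    unfolding Nj[OF j] gen ..
  also have "\<dots> = Phi l P i0" unfolding Phi_def by (rule ratio_alg[OF norm i0(2) l])
  also have "\<dots> = (\<Sum>i\<in>{1..k}. if B j i \<noteq> 0 then Phi l P i else 0)"
    by (subst sum_single[OF _ i0(1)]) (use oth i0 in auto)
  finally show ?thesis .
qed

lemma beta_eq:
  assumes l: "l \<ge> 1"
  shows "beta k F eps l P B = (\<Sum>i\<in>{1..k}. Phi l P i)"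
proof -
  have "beta k F eps l P B = (\<Sum>j\<in>{1..k}. \<Sum>i\<in>{1..k}. if B j i \<noteq> 0 then Phi l P i else 0)"
    unfolding beta_def Let_def
  proof (rule sum.cong[OF refl])
    fix j assume "j \<in> {1..k}"
    then have j: "1 \<le> j" "j \<le> k" by auto
    show "teval (dimF k) ((cov (dimF k) (gF k F eps) ^^ l) (curv (dimF k) (gF k F eps))) P
            ([B 0, B j, B j, B (2 * k + 1 + j)] @ replicate l (B j)) /
          teval (dimF k) (cov (dimF k) (gF k F eps) (curv (dimF k) (gF k F eps))) P
            [B 0, B j, B j, B (2 * k + 1 + j), B j] ^ l
          = (\<Sum>i\<in>{1..k}. if B j i \<noteq> 0 then Phi l P i else 0)"
      using ratio_j[OF j l] by simp
  qed
  also have "\<dots> = (\<Sum>i\<in>{1..k}. \<Sum>j\<in>{1..k}. if B j i \<noteq> 0 then Phi l P i else 0)"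
    by (rule sum.swap)
  also have "\<dots> = (\<Sum>i\<in>{1..k}. Phi l P i)"
  proof (rule sum.cong[OF refl])
    fix i assume "i \<in> {1..k}"
    then have i: "1 \<le> i" "i \<le> k" by auto
    obtain j0 where j0: "j0 \<in> {1..k}" "B j0 i \<noteq> 0" using M5[OF i] by blast
    show "(\<Sum>j\<in>{1..k}. if B j i \<noteq> 0 then Phi l P i else 0) = Phi l P i"
    proof (rule sum_unique[OF _ j0(1)])
      fix j assume j: "j \<in> {1..k}"
      show "B j i \<noteq> 0 \<longleftrightarrow> j = j0"
      proof
        assume nz: "B j i \<noteq> 0"
        show "j = j0"
        proof (rule ccontr)
          assume "j \<noteq> j0"
          then have "B j i * B j0 i = 0" using M2[of j j0 i] j j0(1) i by auto
          then show False using nz j0(2) by simp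
        qed
      qed (use j0 in simp)
    qed simp
  qed
  finally show ?thesis .
qed

end

theorem lemma5p2:
  fixes k l :: nat and F :: "nat \<Rightarrow> real \<Rightarrow> real" and eps :: "nat \<Rightarrow> real"
    and P :: "nat \<Rightarrow> real" and B B' :: "nat \<Rightarrow> nat \<Rightarrow> real"
  assumes "k \<ge> 1"
    and "\<forall>j\<in>{1..k}. eps j = 1 \<or> eps j = -1"
    and "\<forall>j\<in>{1..k}. smooth_real (F j)"
    and "\<forall>j\<in>{1..k}. \<forall>u. deriv (F j) u + 1 \<noteq> 0"
    and "\<forall>j\<in>{1..k}. \<forall>u. deriv (deriv (F j)) u \<noteq> 0"
    and "l \<ge> 2"
    and "normalized_basis k F eps P B"
    and "normalized_basis k F eps P B'"
  shows "beta k F eps l P B = beta k F eps l P B'"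
proof -
  interpret X1: NBL k F eps P B
    by (unfold_locales) (use assms in auto)
  interpret X2: NBL k F eps P B'
    by (unfold_locales) (use assms in auto)
  have l1: "l \<ge> 1" using assms(6) by simp
  show ?thesis using X1.beta_eq[OF l1] X2.beta_eq[OF l1] by simp
qed

end
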